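(* Let $n,N\ge 2$ and $\varepsilon\ge1$ be integers with $\varepsilon/n\le 1/2$, let $\alpha<h(\varepsilon/n)$, and suppose $$N\le 2+2^{-\varepsilon}\left(\frac{1-\varepsilon/n}{\varepsilon/n}\right)^{\lceil\frac{\varepsilon+1}{2}\rceil}\left(\frac{1}{\sqrt{8\varepsilon(1-\varepsilon/n)}}-2^{-n\alpha}\right).$$ Let $v_1,\dots,v_N$ be independent uniform templates in $\mathbb{Z}_2^n$, let $W_0$ be the event that $d_{\mathcal H}(v_i,v_j)\le\varepsilon$ for some $i\ne j$, and for each $k$ let $v_k'$ be uniform in $\mathbb{Z}_2^n$ independent of everything else and $p_k=\mathbb{P}\left(v_k'\in\bigcup_{j\ne k}B_\varepsilon(v_j)\,\middle|\,\overline{W_0}\right)$. Suppose only $\ell$ of the $N$ users ($1\le \ell\le N$), say users $1,\dots,\ell$, are attackers, and let $p_w=1-\prod_{k=1}^{\ell}(1-p_k)$ and $m_{in}=\left\lceil\frac{-\ln 2}{\ln(1-p_w)}\right\rceil$ be the median number of rounds until at least one attacker successfully impersonates another user. Then $$m_{in}=\Omega\left(2^{n(1-h(\varepsilon/n))-2\log_2(N)-\log_2(\ell)}\right)\quad\text{and}\quad m_{in}=O\left(2^{n(1-h(\varepsilon/n)+\alpha)-\log_2(N)-\log_2(\ell)}\right).$$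
   Context: Templates lie in $\mathbb{Z}_2^n$ with Hamming distance $d_{\mathcal H}$; $B_\varepsilon(t)=\{y: d_{\mathcal H}(t,y)\le\varepsilon\}$. In each round, each attacking user $k$ draws a fresh uniform template $v_k'$ and tries to match another user's enrolled template within distance $\varepsilon$; rounds are independent. $h(x)=-x\log_2x-(1-x)\log_2(1-x)$ is the binary entropy function. *)

theory Defs
  imports "HOL-Probability.Probability"
begin

definition bin_entropy :: "real \<Rightarrow> real" where
  "bin_entropy x = - x * log 2 x - (1 - x) * log 2 (1 - x)"

text \<open>Templates: elements of Z_2^n, represented as boolean lists of length n.\<close>
definition templates :: "nat \<Rightarrow> bool list set" where
  "templates n = {xs. length xs = n}"

definition hamming :: "bool list \<Rightarrow> bool list \<Rightarrow> nat" where
  "hamming xs ys = card {i. i < length xs \<and> xs ! i \<noteq> ys ! i}"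

definition hball :: "nat \<Rightarrow> nat \<Rightarrow> bool list \<Rightarrow> bool list set" where
  "hball n eps t = {y \<in> templates n. hamming t y \<le> eps}"

definition enrolments :: "nat \<Rightarrow> nat \<Rightarrow> (nat \<Rightarrow> bool list) set" where
  "enrolments n N = PiE {1..N} (\<lambda>_. templates n)"

definition W0 :: "nat \<Rightarrow> nat \<Rightarrow> (nat \<Rightarrow> bool list) \<Rightarrow> bool" where
  "W0 N eps v = (\<exists>i\<in>{1..N}. \<exists>j\<in>{1..N}. i \<noteq> j \<and> hamming (v i) (v j) \<le> eps)"

definition joint_pmf :: "nat \<Rightarrow> nat \<Rightarrow> ((nat \<Rightarrow> bool list) \<times> bool list) pmf" where
  "joint_pmf n N = pmf_of_set (enrolments n N \<times> templates n)"

definition p_att :: "nat \<Rightarrow> nat \<Rightarrow> nat \<Rightarrow> nat \<Rightarrow> real" where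
  "p_att n N eps k =
     measure_pmf.prob (joint_pmf n N)
        {(v, w). \<not> W0 N eps v \<and> w \<in> (\<Union>j\<in>{1..N} - {k}. hball n eps (v j))}
     / measure_pmf.prob (joint_pmf n N) {(v, w). \<not> W0 N eps v}"

definition p_w :: "nat \<Rightarrow> nat \<Rightarrow> nat \<Rightarrow> nat \<Rightarrow> real" where
  "p_w n N eps l = 1 - (\<Prod>k\<in>{1..l}. 1 - p_att n N eps k)"

definition m_in :: "nat \<Rightarrow> nat \<Rightarrow> nat \<Rightarrow> nat \<Rightarrow> int" where
  "m_in n N eps l = \<lceil>- ln 2 / ln (1 - p_w n N eps l)\<rceil>"

end

theory Submission
  imports Defs
begin


definition dset :: "bool list \<Rightarrow> bool list \<Rightarrow> nat set" where
  "dset t y = {i. i < length t \<and> t ! i \<noteq> y ! i}"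

definition flip :: "bool list \<Rightarrow> nat set \<Rightarrow> bool list" where
  "flip t D = map (\<lambda>i. if i \<in> D then \<not> t ! i else t ! i) [0..<length t]"

definition Vb :: "nat \<Rightarrow> nat \<Rightarrow> nat" where
  "Vb n m = (\<Sum>i\<le>m. n choose i)"

lemma finite_templates: "finite (templates n)"
proof -
  have "templates n = {xs. set xs \<subseteq> (UNIV::bool set) \<and> length xs = n}"
    by (auto simp: templates_def)
  then show ?thesis using finite_lists_length_eq[of "UNIV::bool set" n] by simp
qed

lemma card_templates: "card (templates n) = 2 ^ n"
proof -
  have "templates n = {xs. set xs \<subseteq> (UNIV::bool set) \<and> length xs = n}"
    by (auto simp: templates_def)
  then show ?thesis using card_lists_length_eq[of "UNIV::bool set" n] by simp
qed

lemma templates_ne: "templates n \<noteq> {}"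
  by (auto simp: templates_def intro: exI[of _ "replicate n False"])

lemma hamming_dset: "hamming t y = card (dset t y)"
  by (simp add: hamming_def dset_def)

lemma dset_sym: "length t = length y \<Longrightarrow> dset t y = dset y t"
  by (auto simp: dset_def)

lemma hamming_sym: "length t = length y \<Longrightarrow> hamming t y = hamming y t"
  by (simp add: hamming_dset dset_sym)

lemma dset_sub: "dset t y \<subseteq> {0..<length t}"
  by (auto simp: dset_def)

lemma flip_templates: "length (flip t D) = length t"
  by (simp add: flip_def)

lemma dset_flip: "D \<subseteq> {0..<length t} \<Longrightarrow> dset t (flip t D) = D"
  by (auto simp: dset_def flip_def)

lemma inj_dset: "inj_on (dset t) (templates (length t))"
proof (rule inj_onI)
  fix y z assume y: "y \<in> templates (length t)" and z: "z \<in> templates (length t)"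
    and e: "dset t y = dset t z"
  show "y = z"
  proof (rule nth_equalityI)
    show "length y = length z" using y z by (simp add: templates_def)
    fix i assume "i < length y"
    then have i: "i < length t" using y by (simp add: templates_def)
    have "(i \<in> dset t y) = (i \<in> dset t z)" using e by simp
    then show "y ! i = z ! i" using i by (auto simp: dset_def)
  qed
qed

lemma image_dset: "dset t ` templates (length t) = Pow {0..<length t}"
proof
  show "dset t ` templates (length t) \<subseteq> Pow {0..<length t}" using dset_sub by auto
  show "Pow {0..<length t} \<subseteq> dset t ` templates (length t)"
  proof
    fix D assume "D \<in> Pow {0..<length t}"
    then have "dset t (flip t D) = D" "flip t D \<in> templates (length t)"
      by (auto simp: dset_flip templates_def flip_templates)
    then show "D \<in> dset t ` templates (length t)" by force
  qed
qed

lemma card_templates_pred: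
  assumes "t \<in> templates n"
  shows "card {y \<in> templates n. P (dset t y)} = card {D \<in> Pow {0..<n}. P D}"
proof -
  have n: "length t = n" using assms by (simp add: templates_def)
  have "inj_on (dset t) {y \<in> templates n. P (dset t y)}"
    using inj_dset[of t] n by (auto intro: inj_on_subset)
  moreover have "dset t ` {y \<in> templates n. P (dset t y)} = {D \<in> Pow {0..<n}. P D}"
  proof
    show "dset t ` {y \<in> templates n. P (dset t y)} \<subseteq> {D \<in> Pow {0..<n}. P D}"
      using dset_sub[of t] n by auto
    show "{D \<in> Pow {0..<n}. P D} \<subseteq> dset t ` {y \<in> templates n. P (dset t y)}"
    proof
      fix D assume D: "D \<in> {D \<in> Pow {0..<n}. P D}"
      then have "dset t (flip t D) = D" "flip t D \<in> templates n"
        using n by (auto simp: dset_flip templates_def flip_templates)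
      then show "D \<in> dset t ` {y \<in> templates n. P (dset t y)}" using D
        by (metis (mono_tags, lifting) image_eqI mem_Collect_eq)
    qed
  qed
  ultimately show ?thesis by (metis card_image)
qed

lemma card_small_subsets:
  "card {D \<in> Pow {0..<n}. card D \<le> m} = Vb n m"
proof -
  have eq: "{D \<in> Pow {0..<n}. card D \<le> m} = (\<Union>i\<le>m. {D. D \<subseteq> {0..<n} \<and> card D = i})"
    by auto
  have "card (\<Union>i\<le>m. {D. D \<subseteq> {0..<n} \<and> card D = i}) = (\<Sum>i\<le>m. card {D. D \<subseteq> {0..<n} \<and> card D = i})"
    by (rule card_UN_disjoint) auto
  also have "\<dots> = Vb n m" by (simp add: n_subsets Vb_def)
  finally show ?thesis using eq by simp
qed

lemma card_hball:
  assumes "t \<in> templates n"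
  shows "card (hball n m t) = Vb n m"
proof -
  have "hball n m t = {y \<in> templates n. card (dset t y) \<le> m}"
    by (simp add: hball_def hamming_dset)
  then show ?thesis using card_templates_pred[OF assms, of "\<lambda>D. card D \<le> m"] card_small_subsets
    by simp
qed

lemma hball_sub: "hball n m t \<subseteq> templates n"
  by (auto simp: hball_def)

lemma finite_hball: "finite (hball n m t)"
  using finite_subset[OF hball_sub finite_templates] .



lemma card_split: "finite A \<Longrightarrow> card A = card (A \<inter> B) + card (A - B)"
  by (metis Int_Diff_disjoint Int_Diff_Un card_Un_disjoint finite_Diff finite_Int)

lemma inter_card:
  assumes u: "u \<in> templates n" and w: "w \<in> templates n"
  shows "card (hball n m u \<inter> hball n m w)
           \<le> 2 ^ hamming u w * Vb n ((2*m - hamming u w) div 2)"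
    and "2*m < hamming u w \<Longrightarrow> card (hball n m u \<inter> hball n m w) = 0"
proof -
  define S where "S = dset u w"
  define d where "d = hamming u w"
  have lu: "length u = n" and lw: "length w = n" using u w by (auto simp: templates_def)
  have dS: "d = card S" by (simp add: S_def d_def hamming_dset)
  have Sfin: "finite S" using dset_sub[of u w] lu by (auto simp: S_def intro: finite_subset)
  have key: "2 * card (dset u y - S) + d \<le> 2*m" if y: "y \<in> hball n m u \<inter> hball n m w" for y
  proof -
    define D where "D = dset u y"
    have ly: "length y = n" using y by (auto simp: hball_def templates_def)
    have Dfin: "finite D" using dset_sub[of u y] by (auto simp: D_def intro: finite_subset)
    have wy: "dset w y = (S - D) \<union> (D - S)"
      using lu lw ly by (auto simp: S_def D_def dset_def)
    have c1: "card (dset w y) = card (S - D) + card (D - S)"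
      unfolding wy by (rule card_Un_disjoint) (use Sfin Dfin in auto)
    have c2: "card D = card (D \<inter> S) + card (D - S)" using card_split[OF Dfin] .
    have c3: "card S = card (S \<inter> D) + card (S - D)" using card_split[OF Sfin] .
    have "card D \<le> m" using y by (simp add: hball_def hamming_dset D_def)
    moreover have "card (dset w y) \<le> m" using y by (simp add: hball_def hamming_dset)
    ultimately show ?thesis using c1 c2 c3 dS by (simp add: D_def Int_commute)
  qed
  have sub: "hball n m u \<inter> hball n m w \<subseteq> {y \<in> templates n. 2 * card (dset u y - S) + d \<le> 2*m}"
    using key by (auto simp: hball_def)
  have c4: "card {y \<in> templates n. 2 * card (dset u y - S) + d \<le> 2*m}
      = card {D \<in> Pow {0..<n}. 2 * card (D - S) + d \<le> 2*m}"
    by (rule card_templates_pred[OF u])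
  have fin1: "finite {y \<in> templates n. 2 * card (dset u y - S) + d \<le> 2*m}"
    using finite_templates by auto
  have le1: "card (hball n m u \<inter> hball n m w) \<le> card {D \<in> Pow {0..<n}. 2 * card (D - S) + d \<le> 2*m}"
    using card_mono[OF fin1 sub] c4 by simp
  show "2*m < hamming u w \<Longrightarrow> card (hball n m u \<inter> hball n m w) = 0"
  proof -
    assume "2*m < hamming u w"
    then have "{D \<in> Pow {0..<n}. 2 * card (D - S) + d \<le> 2*m} = {}" by (auto simp: d_def)
    then show ?thesis using le1 by (metis card.empty le_zero_eq)
  qed
  define b where "b = (2*m - d) div 2"
  have inj: "inj_on (\<lambda>D. (D \<inter> S, D - S)) {D \<in> Pow {0..<n}. 2 * card (D - S) + d \<le> 2*m}"
    by (rule inj_onI) (metis Int_Diff_Un prod.inject)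
  have img: "(\<lambda>D. (D \<inter> S, D - S)) ` {D \<in> Pow {0..<n}. 2 * card (D - S) + d \<le> 2*m}
      \<subseteq> Pow S \<times> {E \<in> Pow {0..<n}. card E \<le> b}"
    by (auto simp: b_def)
  have fin2: "finite (Pow S \<times> {E \<in> Pow {0..<n}. card E \<le> b})" using Sfin by auto
  have "card {D \<in> Pow {0..<n}. 2 * card (D - S) + d \<le> 2*m} \<le> card (Pow S \<times> {E \<in> Pow {0..<n}. card E \<le> b})"
    by (rule card_inj_on_le[OF inj img fin2])
  also have "\<dots> = 2 ^ d * Vb n b"
    using Sfin dS card_small_subsets[of n b] by (simp add: card_cartesian_product card_Pow)
  finally show "card (hball n m u \<inter> hball n m w) \<le> 2 ^ hamming u w * Vb n ((2*m - hamming u w) div 2)"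
    using le1 by (simp add: b_def d_def)
qed


lemma bonf:
  fixes B :: "'i \<Rightarrow> 'a set" and V I :: real
  assumes "finite J"
    and "\<forall>j\<in>J. finite (B j) \<and> real (card (B j)) = V"
    and "\<forall>i\<in>J. \<forall>j\<in>J. i \<noteq> j \<longrightarrow> real (card (B i \<inter> B j)) \<le> I"
  shows "real (card (\<Union>j\<in>J. B j)) \<ge> real (card J) * V - real (card J) * (real (card J) - 1) / 2 * I"
  using assms
proof (induction J rule: finite_induct)
  case empty
  then show ?case by simp
next
  case (insert a F)
  define U where "U = (\<Union>j\<in>F. B j)"
  have IH: "real (card U) \<ge> real (card F) * V - real (card F) * (real (card F) - 1) / 2 * I"
    using insert by (simp add: U_def)
  have fa: "finite (B a)" and Va: "real (card (B a)) = V" using insert.prems by auto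
  have fU: "finite U" using insert by (auto simp: U_def)
  have un: "card (B a \<union> U) + card (B a \<inter> U) = card (B a) + card U"
    using card_Un_Int[OF fa fU] by simp
  have "B a \<inter> U = (\<Union>j\<in>F. B a \<inter> B j)" by (auto simp: U_def)
  moreover have "card (\<Union>j\<in>F. B a \<inter> B j) \<le> (\<Sum>j\<in>F. card (B a \<inter> B j))"
    by (rule card_UN_le) (rule insert.hyps(1))
  ultimately have "card (B a \<inter> U) \<le> (\<Sum>j\<in>F. card (B a \<inter> B j))"
    by simp
  then have "real (card (B a \<inter> U)) \<le> (\<Sum>j\<in>F. real (card (B a \<inter> B j)))"
    by (metis of_nat_le_iff of_nat_sum)
  also have "\<dots> \<le> (\<Sum>j\<in>F. I)"
    apply (rule sum_mono) using insert by auto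
  also have "\<dots> = real (card F) * I" by simp
  finally have ia: "real (card (B a \<inter> U)) \<le> real (card F) * I" .
  have "real (card (B a \<union> U)) = V + real (card U) - real (card (B a \<inter> U))"
    using un Va by (metis add_diff_cancel_right' of_nat_add)
  then have lo: "real (card (B a \<union> U)) \<ge> V + (real (card F) * V - real (card F) * (real (card F) - 1) / 2 * I) - real (card F) * I"
    using IH ia by linarith
  have eq: "real (Suc (card F)) * V - real (Suc (card F)) * (real (Suc (card F)) - 1) / 2 * I
     = V + (real (card F) * V - real (card F) * (real (card F) - 1) / 2 * I) - real (card F) * I"
    by (simp add: field_simps)
  have "card (insert a F) = Suc (card F)" using insert by simp
  moreover have "(\<Union>j\<in>insert a F. B j) = B a \<union> U" by (simp add: U_def)
  ultimately show ?case using lo eq by simp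
qed

definition Uk :: "nat \<Rightarrow> nat \<Rightarrow> nat \<Rightarrow> nat \<Rightarrow> (nat \<Rightarrow> bool list) \<Rightarrow> bool list set" where
  "Uk n N m k v = (\<Union>j\<in>{1..N} - {k}. hball n m (v j))"

lemma Uk_upper:
  assumes v: "v \<in> enrolments n N" and k: "k \<in> {1..N}"
  shows "card (Uk n N m k v) \<le> (N - 1) * Vb n m"
proof -
  have "card (Uk n N m k v) \<le> (\<Sum>j\<in>{1..N} - {k}. card (hball n m (v j)))"
    unfolding Uk_def by (rule card_UN_le) simp
  also have "\<dots> = (\<Sum>j\<in>{1..N} - {k}. Vb n m)"
    apply (rule sum.cong) using v by (auto simp: enrolments_def PiE_iff intro!: card_hball)
  also have "\<dots> = card ({1..N} - {k}) * Vb n m" by simp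
  also have "\<dots> \<le> (N - 1) * Vb n m"
    using k by (simp add: card_Diff_singleton)
  finally show ?thesis .
qed

lemma Uk_sub: "Uk n N m k v \<subseteq> templates n"
  using hball_sub by (auto simp: Uk_def)


lemma exists_sep:
  "(N - 1) * Vb n m < 2 ^ n \<Longrightarrow> \<exists>v\<in>enrolments n N. \<not> W0 N m v"
proof (induction N)
  case 0
  have "(\<lambda>_. undefined) \<in> enrolments n 0" by (simp add: enrolments_def)
  moreover have "\<not> W0 0 m (\<lambda>_. undefined)" by (simp add: W0_def)
  ultimately show ?case by blast
next
  case (Suc N)
  have h: "(N - 1) * Vb n m \<le> (Suc N - 1) * Vb n m" by simp
  have "(N - 1) * Vb n m < 2 ^ n" using h Suc.prems by (rule le_less_trans)
  then obtain v where v: "v \<in> enrolments n N" and nv: "\<not> W0 N m v" using Suc.IH by blast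
  define U where "U = (\<Union>j\<in>{1..N}. hball n m (v j))"
  have "card U \<le> (\<Sum>j\<in>{1..N}. card (hball n m (v j)))" unfolding U_def by (rule card_UN_le) simp
  also have "\<dots> = (\<Sum>j\<in>{1..N}. Vb n m)"
    apply (rule sum.cong) using v by (auto simp: enrolments_def PiE_iff intro!: card_hball)
  also have "\<dots> = N * Vb n m" by simp
  finally have "card U < card (templates n)" using Suc.prems by (simp add: card_templates)
  moreover have fU: "finite U" by (simp add: U_def finite_hball)
  ultimately have "\<not> templates n \<subseteq> U" using card_mono[OF fU] by (meson not_le)
  then obtain y where y: "y \<in> templates n" "y \<notin> U" by blast
  define v' where "v' = v(Suc N := y)"
  have "v' \<in> enrolments n (Suc N)"
    using v y by (auto simp: enrolments_def v'_def PiE_def extensional_def)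
  moreover have "\<not> W0 (Suc N) m v'"
  proof
    assume "W0 (Suc N) m v'"
    then obtain i j where ij: "i \<in> {1..Suc N}" "j \<in> {1..Suc N}" "i \<noteq> j" "hamming (v' i) (v' j) \<le> m"
      by (auto simp: W0_def)
    show False
    proof (cases "i = Suc N")
      case True
      then have j: "j \<in> {1..N}" using ij by auto
      have "length (v j) = n" using v j by (auto simp: enrolments_def templates_def)
      moreover have "length y = n" using y by (simp add: templates_def)
      moreover have "hamming y (v j) \<le> m" using ij True j by (simp add: v'_def)
      ultimately have "y \<in> hball n m (v j)" using y hamming_sym by (simp add: hball_def)
      then show False using y j by (auto simp: U_def)
    next
      case False
      note iF = False
      show ?thesis
      proof (cases "j = Suc N")
        case True
        then have i: "i \<in> {1..N}" using ij iF by auto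
        have "hamming (v i) y \<le> m" using ij True i by (simp add: v'_def)
        then have "y \<in> hball n m (v i)" using y by (simp add: hball_def)
        then show False using y i by (auto simp: U_def)
      next
        case False
        then have "i \<in> {1..N}" "j \<in> {1..N}" using ij iF by auto
        then have "hamming (v i) (v j) \<le> m" using ij by (simp add: v'_def)
        then show False using nv ij \<open>i \<in> {1..N}\<close> \<open>j \<in> {1..N}\<close> unfolding W0_def by blast
      qed
    qed
  qed
  ultimately show ?case by blast
qed


lemma p_att_eq:
  fixes n N m k :: nat
  defines "Sep \<equiv> {v \<in> enrolments n N. \<not> W0 N m v}"
  shows "p_att n N m k = (\<Sum>v\<in>Sep. real (card (Uk n N m k v))) / (real (card Sep) * 2 ^ n)"
proof -
  define E where "E = enrolments n N"
  define T where "T = templates n"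
  have fE: "finite E" by (simp add: E_def enrolments_def finite_PiE finite_templates)
  have neE: "E \<noteq> {}" using templates_ne by (simp add: E_def enrolments_def PiE_eq_empty_iff)
  have fT: "finite T" by (simp add: T_def finite_templates)
  have neT: "T \<noteq> {}" by (simp add: T_def templates_ne)
  have fS: "finite (E \<times> T)" using fE fT by simp
  have neS: "E \<times> T \<noteq> {}" using neE neT by simp
  have c0: "(E \<times> T) \<inter> {(v, w). \<not> W0 N m v} = Sep \<times> T"
    by (auto simp: Sep_def E_def)
  have c1: "(E \<times> T) \<inter> {(v, w). \<not> W0 N m v \<and> w \<in> (\<Union>j\<in>{1..N} - {k}. hball n m (v j))}
       = Sigma Sep (\<lambda>v. Uk n N m k v)"
    using Uk_sub by (auto simp: Sep_def E_def T_def Uk_def hball_def)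
  have fSep: "finite Sep" using fE by (simp add: Sep_def E_def)
  have cS: "card (Sigma Sep (\<lambda>v. Uk n N m k v)) = (\<Sum>v\<in>Sep. card (Uk n N m k v))"
    using fSep finite_subset[OF Uk_sub finite_templates] by (simp add: card_SigmaI)
  have pos: "real (card (E \<times> T)) > 0" using fS neS by (simp add: card_gt_0_iff)
  have "p_att n N m k = (real (card (Sigma Sep (\<lambda>v. Uk n N m k v))) / card (E \<times> T))
                / (real (card (Sep \<times> T)) / card (E \<times> T))"
    unfolding p_att_def joint_pmf_def E_def[symmetric] T_def[symmetric]
    using fS neS by (simp add: measure_pmf_of_set c0[symmetric] c1[symmetric])
  also have "\<dots> = real (card (Sigma Sep (\<lambda>v. Uk n N m k v))) / real (card (Sep \<times> T))"
    using pos by (simp add: divide_simps)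
  also have "\<dots> = (\<Sum>v\<in>Sep. real (card (Uk n N m k v))) / (real (card Sep) * 2 ^ n)"
    using cS by (simp add: card_cartesian_product T_def card_templates)
  finally show ?thesis .
qed



lemma binom_sum: "(\<Sum>j\<le>n. real (n choose j) * x^j * y^(n-j)) = (x + y :: real)^n"
  by (simp add: binomial_ring)

lemma mom1_Suc:
  fixes x y :: real
  shows "(\<Sum>j\<le>Suc n. real j * (real (Suc n choose j) * x^j * y^(Suc n - j))) = real (Suc n) * x * (x+y)^n"
proof -
  have "(\<Sum>j\<le>Suc n. real j * (real (Suc n choose j) * x^j * y^(Suc n - j)))
      = (\<Sum>i\<le>n. real (Suc i) * (real (Suc n choose Suc i) * x^(Suc i) * y^(Suc n - Suc i)))"
    by (subst sum.atMost_Suc_shift) simp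
  also have "\<dots> = (\<Sum>i\<le>n. real (Suc n) * x * (real (n choose i) * x^i * y^(n - i)))"
  proof (rule sum.cong)
    fix i assume "i \<in> {..n}"
    have c: "real (Suc i) * real (Suc n choose Suc i) = real (Suc n) * real (n choose i)"
      using Suc_times_binomial[of i n] by (metis of_nat_mult)
    have "real (Suc i) * (real (Suc n choose Suc i) * x^(Suc i) * y^(Suc n - Suc i))
        = (real (Suc i) * real (Suc n choose Suc i)) * x * x^i * y^(n - i)"
      by (simp add: mult_ac)
    also have "\<dots> = (real (Suc n) * real (n choose i)) * x * x^i * y^(n - i)"
      using c by simp
    finally show "real (Suc i) * (real (Suc n choose Suc i) * x^(Suc i) * y^(Suc n - Suc i))
        = real (Suc n) * x * (real (n choose i) * x^i * y^(n - i))"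
      by (simp add: mult_ac)
  qed simp
  also have "\<dots> = real (Suc n) * x * (x+y)^n"
    by (simp add: sum_distrib_left[symmetric] binom_sum)
  finally show ?thesis .
qed

lemma mom1:
  fixes x :: real
  shows "(\<Sum>j\<le>n. real j * (real (n choose j) * x^j * (1-x)^(n - j))) = real n * x"
proof (cases n)
  case 0 then show ?thesis by simp
next
  case (Suc k) then show ?thesis using mom1_Suc[of k x "1-x"] by simp
qed

lemma mom2_Suc:
  fixes x :: real
  shows "(\<Sum>j\<le>Suc n. (real j)^2 * (real (Suc n choose j) * x^j * (1-x)^(Suc n - j)))
        = real (Suc n) * x * (real n * x + 1)"
proof -
  have "(\<Sum>j\<le>Suc n. (real j)^2 * (real (Suc n choose j) * x^j * (1-x)^(Suc n - j)))
      = (\<Sum>i\<le>n. (real (Suc i))^2 * (real (Suc n choose Suc i) * x^(Suc i) * (1-x)^(Suc n - Suc i)))"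
    by (subst sum.atMost_Suc_shift) simp
  also have "\<dots> = (\<Sum>i\<le>n. real (Suc n) * x * ((real i + 1) * (real (n choose i) * x^i * (1-x)^(n - i))))"
  proof (rule sum.cong)
    fix i assume "i \<in> {..n}"
    have c: "real (Suc i) * real (Suc n choose Suc i) = real (Suc n) * real (n choose i)"
      using Suc_times_binomial[of i n] by (metis of_nat_mult)
    have "(real (Suc i))^2 * (real (Suc n choose Suc i) * x^(Suc i) * (1-x)^(Suc n - Suc i))
        = real (Suc i) * (real (Suc i) * real (Suc n choose Suc i)) * x * x^i * (1-x)^(n - i)"
      by (simp add: power2_eq_square mult_ac)
    also have "\<dots> = (real i + 1) * (real (Suc n) * real (n choose i)) * x * x^i * (1-x)^(n - i)"
      using c by simp
    finally show "(real (Suc i))^2 * (real (Suc n choose Suc i) * x^(Suc i) * (1-x)^(Suc n - Suc i))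
        = real (Suc n) * x * ((real i + 1) * (real (n choose i) * x^i * (1-x)^(n - i)))"
      by (simp only: mult_ac)
  qed simp
  also have "\<dots> = real (Suc n) * x * ((\<Sum>i\<le>n. real i * (real (n choose i) * x^i * (1-x)^(n - i)))
                     + (\<Sum>i\<le>n. real (n choose i) * x^i * (1-x)^(n - i)))"
  proof -
    define B where "B i = real (n choose i) * x^i * (1-x)^(n - i)" for i
    have "(\<Sum>i\<le>n. real (Suc n) * x * ((real i + 1) * B i)) = real (Suc n) * x * (\<Sum>i\<le>n. (real i + 1) * B i)"
      by (simp add: sum_distrib_left)
    also have "(\<Sum>i\<le>n. (real i + 1) * B i) = (\<Sum>i\<le>n. real i * B i) + (\<Sum>i\<le>n. B i)"
      by (simp add: distrib_right sum.distrib)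
    finally show ?thesis by (simp add: B_def)
  qed
  also have "\<dots> = real (Suc n) * x * (real n * x + 1)"
    using mom1[of n x] binom_sum[of n x "1-x"] by simp
  finally show ?thesis .
qed

lemma variance:
  fixes x :: real
  assumes "0 < n"
  shows "(\<Sum>j\<le>n. (real j - real n * x)^2 * (real (n choose j) * x^j * (1-x)^(n - j)))
        = real n * x * (1 - x)"
proof -
  obtain k where k: "n = Suc k" using assms by (cases n) auto
  define b where "b j = real (n choose j) * x^j * (1-x)^(n - j)" for j
  have s0: "(\<Sum>j\<le>n. b j) = 1" using binom_sum[of n x "1-x"] by (simp add: b_def)
  have s1: "(\<Sum>j\<le>n. real j * b j) = real n * x" using mom1[of n x] by (simp add: b_def)
  have s2: "(\<Sum>j\<le>n. (real j)^2 * b j) = real n * x * (real k * x + 1)"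
    using mom2_Suc[of k x] k by (simp add: b_def)
  have "(\<Sum>j\<le>n. (real j - real n * x)^2 * b j)
      = (\<Sum>j\<le>n. (real j)^2 * b j) - 2 * (real n * x) * (\<Sum>j\<le>n. real j * b j) + (real n * x)^2 * (\<Sum>j\<le>n. b j)"
    by (simp add: power2_diff algebra_simps sum.distrib sum_subtractf sum_distrib_left sum_distrib_right)
  also have "\<dots> = real n * x * (1 - x)"
    using s0 s1 s2 k by (simp add: power2_eq_square algebra_simps)
  finally show ?thesis by (simp add: b_def)
qed

lemma binom_step: "j < n \<Longrightarrow> Suc j * (n choose Suc j) = (n - j) * (n choose j)"
  by (metis binomial_absorb_comp binomial_absorption)

context
  fixes n m :: nat
  assumes m0: "0 < m" and mn: "m < n"
begin

definition bb :: "nat \<Rightarrow> real" where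
  "bb j = real (n choose j) * (real m / real n)^j * (1 - real m / real n)^(n - j)"

lemma bb_nonneg: "bb j \<ge> 0"
proof -
  have "real m / real n \<le> 1" using mn by simp
  then show ?thesis by (simp add: bb_def)
qed

lemma bb_step:
  assumes "j < n"
  shows "bb (Suc j) * real (Suc j) * (1 - real m / real n) = bb j * real (n - j) * (real m / real n)"
proof -
  define x where "x = real m / real n"
  have c: "real (Suc j) * real (n choose Suc j) = real (n - j) * real (n choose j)"
    using binom_step[OF assms] by (metis of_nat_mult)
  have p: "(1 - x)^(n - Suc j) * (1 - x) = (1 - x)^(n - j)"
    using assms by (metis Suc_diff_Suc power_Suc2)
  have "bb (Suc j) * real (Suc j) * (1 - x) = (real (Suc j) * real (n choose Suc j)) * x^(Suc j) * ((1-x)^(n - Suc j) * (1 - x))"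
    unfolding bb_def x_def[symmetric] by (simp only: mult_ac)
  also have "\<dots> = real (n - j) * real (n choose j) * x^(Suc j) * (1-x)^(n - j)"
    using c p by simp
  also have "\<dots> = bb j * real (n - j) * x" unfolding bb_def x_def[symmetric] by (simp only: mult_ac power_Suc)
  finally show ?thesis by (simp add: x_def)
qed

lemma bb_up:
  assumes "Suc j \<le> m"
  shows "bb j \<le> bb (Suc j)"
proof -
  define x where "x = real m / real n"
  have nx: "real n * x = real m" using mn by (simp add: x_def)
  have x1: "x < 1" using mn m0 by (simp add: x_def)
  have jn: "j < n" using assms mn by simp
  have e: "bb (Suc j) * (real (Suc j) * (1 - x)) = bb j * (real (n - j) * x)"
    using bb_step[OF jn] unfolding x_def by (simp only: mult.assoc)
  have "real (n - j) * x \<ge> real (Suc j) * (1 - x)"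
  proof -
    have "real (n - j) * x = real m - real j * x" using jn nx by (simp add: of_nat_diff algebra_simps)
    moreover have "real (Suc j) \<le> real m" using assms by simp
    moreover have "x \<ge> 0" by (simp add: x_def)
    ultimately show ?thesis by (simp add: algebra_simps)
  qed
  then have "bb j * (real (Suc j) * (1 - x)) \<le> bb (Suc j) * (real (Suc j) * (1 - x))"
    using e bb_nonneg[of j] by (metis mult_left_mono)
  moreover have "real (Suc j) * (1 - x) > 0" using x1 by simp
  ultimately show ?thesis by (rule mult_right_le_imp_le)
qed

lemma bb_down:
  assumes "m \<le> j" "j < n"
  shows "bb (Suc j) \<le> bb j"
proof -
  define x where "x = real m / real n"
  have nx: "real n * x = real m" using mn by (simp add: x_def)
  have x1: "x < 1" using mn m0 by (simp add: x_def)
  have e: "bb (Suc j) * (real (Suc j) * (1 - x)) = bb j * (real (n - j) * x)"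
    using bb_step[OF assms(2)] unfolding x_def by (simp only: mult.assoc)
  have "real (n - j) * x \<le> real (Suc j) * (1 - x)"
  proof -
    have "real (n - j) * x = real m - real j * x" using assms nx by (simp add: of_nat_diff algebra_simps)
    moreover have "real m \<le> real j" using assms by simp
    moreover have "x \<ge> 0" by (simp add: x_def)
    ultimately show ?thesis using x1 by (simp add: algebra_simps)
  qed
  then have "bb (Suc j) * (real (Suc j) * (1 - x)) \<le> bb j * (real (Suc j) * (1 - x))"
    using e bb_nonneg[of j] by (metis mult_left_mono)
  moreover have "real (Suc j) * (1 - x) > 0" using x1 by simp
  ultimately show ?thesis by (rule mult_right_le_imp_le)
qed

lemma bb_mode:
  assumes "j \<le> n"
  shows "bb j \<le> bb m"
proof (cases "j \<le> m")
  case True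
  have "\<forall>k. j \<le> k \<and> k \<le> m \<longrightarrow> bb j \<le> bb k"
  proof
    fix k show "j \<le> k \<and> k \<le> m \<longrightarrow> bb j \<le> bb k"
    proof (induction k)
      case 0 then show ?case by simp
    next
      case (Suc k)
      show ?case
      proof
        assume h: "j \<le> Suc k \<and> Suc k \<le> m"
        show "bb j \<le> bb (Suc k)"
        proof (cases "j = Suc k")
          case True then show ?thesis by simp
        next
          case False
          then have "bb j \<le> bb k" using Suc h by simp
          also have "\<dots> \<le> bb (Suc k)" using bb_up h by simp
          finally show ?thesis .
        qed
      qed
    qed
  qed
  then show ?thesis using True by simp
next
  case False
  have "\<forall>d. m + d \<le> n \<longrightarrow> bb (m + d) \<le> bb m"
  proof
    fix d show "m + d \<le> n \<longrightarrow> bb (m + d) \<le> bb m"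
    proof (induction d)
      case 0 then show ?case by simp
    next
      case (Suc d)
      show ?case
      proof
        assume h: "m + Suc d \<le> n"
        have "bb (m + Suc d) = bb (Suc (m + d))" by simp
        also have "\<dots> \<le> bb (m + d)" using bb_down[of "m + d"] h by simp
        also have "\<dots> \<le> bb m" using Suc h by simp
        finally show "bb (m + Suc d) \<le> bb m" .
      qed
    qed
  qed
  then have "m + (j - m) \<le> n \<longrightarrow> bb (m + (j - m)) \<le> bb m" by blast
  moreover have "m + (j - m) = j" using False by simp
  ultimately show ?thesis using assms by simp
qed

end



lemma H_le:
  fixes n m :: nat
  assumes m1: "1 \<le> m" and mn: "2 * m \<le> n"
  shows "1 / ((real m / real n)^m * (1 - real m / real n)^(n - m))
          \<le> 4 * sqrt (8 * real m * (1 - real m / real n)) * real (n choose m)"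
proof -
  have m0: "0 < m" using m1 by simp
  have mlt: "m < n" using mn m1 by simp
  define x where "x = real m / real n"
  define b where "b = bb n m"
  have b_def': "b j = real (n choose j) * x^j * (1 - x)^(n - j)" for j
    by (simp add: b_def bb_def[OF m0 mlt] x_def)
  have nx: "real n * x = real m" using mlt by (simp add: x_def)
  have x0: "0 < x" using m0 mlt by (simp add: x_def)
  have xh: "x \<le> 1/2"
  proof -
    have "2 * real m \<le> real n" using mn by (metis of_nat_le_iff of_nat_mult of_nat_numeral)
    moreover have "real n > 0" using m1 mn by simp
    ultimately show ?thesis by (simp add: x_def field_simps)
  qed
  define \<sigma> where "\<sigma> = real m * (1 - x)"
  have sig_ge: "\<sigma> \<ge> 1/2"
  proof -
    have "real m \<ge> 1" using m1 by simp
    moreover have "1 - x \<ge> 1/2" using xh by simp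
    ultimately have "real m * (1 - x) \<ge> 1 * (1/2)" by (intro mult_mono) auto
    then show ?thesis by (simp add: \<sigma>_def)
  qed
  have var: "(\<Sum>j\<le>n. (real j - real m)^2 * b j) = \<sigma>"
    using variance[of n x] mlt nx by (simp add: b_def' \<sigma>_def)
  have s0: "(\<Sum>j\<le>n. b j) = 1" using binom_sum[of n x "1-x"] by (simp add: b_def')
  have bnn: "b j \<ge> 0" for j using bb_nonneg[OF m0 mlt] by (simp add: b_def)
  have mode: "j \<le> n \<Longrightarrow> b j \<le> b m" for j using bb_mode[OF m0 mlt] by (simp add: b_def)
  define R where "R = 2 * sqrt \<sigma>"
  have sq: "sqrt \<sigma> \<ge> 1/2"
  proof -
    have "sqrt \<sigma> \<ge> sqrt (1/4)" using sig_ge by (intro real_sqrt_le_mono) simp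
    moreover have "sqrt (1/4) = (1/2::real)" by (simp add: real_sqrt_divide)
    ultimately show ?thesis by simp
  qed
  have R0: "R > 0" using sq sig_ge by (simp add: R_def)
  have R2: "R^2 = 4 * \<sigma>" using sig_ge by (simp add: R_def power_mult_distrib)
  define F where "F = {j \<in> {..n}. \<bar>real j - real m\<bar> \<le> R}"
  define G where "G = {..n} - F"
  have fF: "finite F" by (simp add: F_def)
  have fG: "finite G" by (simp add: G_def)
  have sumG: "(\<Sum>j\<in>G. b j) \<le> 1/4"
  proof -
    have "(\<Sum>j\<in>G. b j) \<le> (\<Sum>j\<in>G. (real j - real m)^2 * b j / R^2)"
    proof (rule sum_mono)
      fix j assume "j \<in> G"
      then have "\<not> \<bar>real j - real m\<bar> \<le> R" by (simp add: G_def F_def)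
      then have "\<bar>real j - real m\<bar> > R" by linarith
      then have "R^2 \<le> (real j - real m)^2" using R0
        by (metis abs_le_square_iff abs_of_pos less_imp_le)
      then have "1 \<le> (real j - real m)^2 / R^2" using R0 by simp
      then have "b j * 1 \<le> b j * ((real j - real m)^2 / R^2)" using bnn[of j] by (rule mult_left_mono)
      then show "b j \<le> (real j - real m)^2 * b j / R^2" by (simp add: algebra_simps)
    qed
    also have "\<dots> \<le> (\<Sum>j\<le>n. (real j - real m)^2 * b j / R^2)"
      by (rule sum_mono2) (use bnn in \<open>auto simp: G_def\<close>)
    also have "\<dots> = \<sigma> / R^2" using var by (simp add: sum_divide_distrib[symmetric])
    also have "\<dots> = 1/4" using R2 sig_ge by simp
    finally show ?thesis .
  qed
  have split: "(\<Sum>j\<le>n. b j) = (\<Sum>j\<in>F. b j) + (\<Sum>j\<in>G. b j)"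
  proof -
    have "{..n} = F \<union> G" "F \<inter> G = {}" by (auto simp: F_def G_def)
    then show ?thesis using fF fG by (simp add: sum.union_disjoint)
  qed
  have sumF: "(\<Sum>j\<in>F. b j) \<ge> 3/4" using split s0 sumG by simp
  have sumF2: "(\<Sum>j\<in>F. b j) \<le> real (card F) * b m"
  proof -
    have "(\<Sum>j\<in>F. b j) \<le> (\<Sum>j\<in>F. b m)" by (rule sum_mono) (simp add: F_def mode)
    then show ?thesis by simp
  qed
  have cardF: "real (card F) \<le> 2 * R + 1"
  proof -
    define f where "f = \<lfloor>R\<rfloor>"
    have inj: "inj_on (\<lambda>j. int j - int m) F" by (rule inj_onI) simp
    have img: "(\<lambda>j. int j - int m) ` F \<subseteq> {-f..f}"
    proof
      fix z assume "z \<in> (\<lambda>j. int j - int m) ` F"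
      then obtain j where j: "j \<in> F" "z = int j - int m" by blast
      then have "\<bar>real j - real m\<bar> \<le> R" by (simp add: F_def)
      then have "\<bar>real_of_int z\<bar> \<le> R" using j by simp
      then have "real_of_int z \<le> R" "- R \<le> real_of_int z" by auto
      then have "z \<le> f" "-f \<le> z" unfolding f_def by (linarith, linarith)
      then show "z \<in> {-f..f}" by simp
    qed
    have "card F \<le> card {-f..f}"
      using card_inj_on_le[OF inj img] by simp
    also have "\<dots> = nat (2 * f + 1)" by (simp add: card_atLeastAtMost_int)
    finally have "real (card F) \<le> real (nat (2 * f + 1))" by simp
    moreover have "f \<ge> 0" using R0 by (simp add: f_def)
    moreover have "real_of_int f \<le> R" by (simp add: f_def)
    ultimately show ?thesis by simp
  qed
  have bm0: "b m > 0"
  proof -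
    have "real (n choose m) > 0" using mlt by simp
    moreover have "x^m > 0" "(1-x)^(n-m) > 0" using x0 xh by auto
    ultimately show ?thesis by (simp add: b_def')
  qed
  have key: "3/4 \<le> (2 * R + 1) * b m"
  proof -
    have "3/4 \<le> real (card F) * b m" using sumF sumF2 by simp
    also have "\<dots> \<le> (2 * R + 1) * b m" using cardF bm0 by (intro mult_right_mono) auto
    finally show ?thesis .
  qed
  have R6: "2 * R + 1 \<le> 6 * sqrt \<sigma>" using sq by (simp add: R_def)
  have s8: "2 * sqrt \<sigma> \<le> sqrt (8 * real m * (1 - x))"
  proof -
    have "sqrt (8 * real m * (1 - x)) = sqrt 8 * sqrt \<sigma>" by (simp add: \<sigma>_def real_sqrt_mult mult.assoc)
    moreover have "sqrt 8 \<ge> (2::real)"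
      by (rule real_le_rsqrt) simp
    moreover have "sqrt \<sigma> \<ge> 0" using sig_ge by simp
    ultimately show ?thesis by (simp add: mult_right_mono)
  qed
  have Hb: "1 / (x^m * (1 - x)^(n - m)) = real (n choose m) / b m"
    using bm0 mlt by (simp add: b_def')
  have "real (n choose m) / b m \<le> real (n choose m) * (4/3 * (2 * R + 1))"
  proof -
    have "1 / b m \<le> 4/3 * (2 * R + 1)" using key bm0 by (simp add: field_simps)
    then show ?thesis by (metis divide_inverse inverse_eq_divide mult_left_mono of_nat_0_le_iff)
  qed
  also have "\<dots> \<le> real (n choose m) * (8 * sqrt \<sigma>)"
    using R6 by (intro mult_left_mono) auto
  also have "\<dots> \<le> real (n choose m) * (4 * sqrt (8 * real m * (1 - x)))"
    using s8 by (intro mult_left_mono) auto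
  finally show ?thesis using Hb by (simp add: x_def mult_ac)
qed

lemma V_le_H:
  fixes n m :: nat
  assumes m1: "1 \<le> m" and mn: "2 * m \<le> n"
  shows "real (Vb n m) \<le> 1 / ((real m / real n)^m * (1 - real m / real n)^(n - m))"
proof -
  define x where "x = real m / real n"
  have x0: "0 < x" using m1 mn by (simp add: x_def)
  have xh: "x \<le> 1/2"
  proof -
    have "2 * real m \<le> real n" using mn by (metis of_nat_le_iff of_nat_mult of_nat_numeral)
    moreover have "real n > 0" using m1 mn by simp
    ultimately show ?thesis by (simp add: x_def field_simps)
  qed
  have P0: "x^m * (1-x)^(n-m) > 0" using x0 xh by simp
  have "real (Vb n m) * (x^m * (1-x)^(n-m)) = (\<Sum>i\<le>m. real (n choose i) * (x^m * (1-x)^(n-m)))"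
    by (simp add: Vb_def sum_distrib_right)
  also have "\<dots> \<le> (\<Sum>i\<le>m. real (n choose i) * x^i * (1-x)^(n-i))"
  proof (rule sum_mono)
    fix i assume "i \<in> {..m}"
    then have im: "i \<le> m" by simp
    have "x^m * (1-x)^(n-m) = x^i * (x^(m-i) * (1-x)^(n-m))"
      using im by (simp add: power_add[symmetric])
    also have "\<dots> \<le> x^i * ((1-x)^(m-i) * (1-x)^(n-m))"
      using x0 xh by (intro mult_left_mono mult_right_mono power_mono) auto
    also have "\<dots> = x^i * (1-x)^(n-i)"
      using im mn by (simp add: power_add[symmetric])
    finally show "real (n choose i) * (x^m * (1-x)^(n-m)) \<le> real (n choose i) * x^i * (1-x)^(n-i)"
      by (simp add: mult.assoc mult_left_mono)
  qed
  also have "\<dots> \<le> (\<Sum>i\<le>n. real (n choose i) * x^i * (1-x)^(n-i))"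
    using mn xh x0 by (intro sum_mono2) auto
  also have "\<dots> = 1" using binom_sum[of n x "1-x"] by simp
  finally have "real (Vb n m) * (x^m * (1-x)^(n-m)) \<le> 1" .
  then show ?thesis using P0 by (simp add: x_def[symmetric] field_simps)
qed



lemma chain:
  fixes n m i :: nat
  assumes im: "i \<le> m"
  shows "m + K \<le> n \<Longrightarrow> real (n choose (i + K)) \<ge> real (n choose i) * (\<Prod>j<K. real (n - m - j) / real (m + j + 1))"
proof (induction K)
  case 0 then show ?case by simp
next
  case (Suc K)
  have IH: "real (n choose (i + K)) \<ge> real (n choose i) * (\<Prod>j<K. real (n - m - j) / real (m + j + 1))"
    using Suc by simp
  have lt: "i + K < n" using Suc.prems im by simp
  have st: "real (Suc (i + K)) * real (n choose Suc (i + K)) = real (n - (i + K)) * real (n choose (i + K))"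
    using binom_step[OF lt] by (metis of_nat_mult)
  have q: "real (n - m - K) / real (m + K + 1) \<le> real (n - (i + K)) / real (Suc (i + K))"
  proof (rule frac_le)
    show "real (n - m - K) \<le> real (n - (i + K))" using im by simp
    show "0 < real (Suc (i + K))" by simp
    show "real (Suc (i + K)) \<le> real (m + K + 1)" using im by simp
  qed simp
  have nn: "0 \<le> real (n - m - K) / real (m + K + 1)" by simp
  have "real (n choose i) * (\<Prod>j<Suc K. real (n - m - j) / real (m + j + 1))
      = (real (n choose i) * (\<Prod>j<K. real (n - m - j) / real (m + j + 1))) * (real (n - m - K) / real (m + K + 1))"
    by (simp add: mult.assoc)
  also have "\<dots> \<le> real (n choose (i + K)) * (real (n - (i + K)) / real (Suc (i + K)))"
    using IH q nn by (intro mult_mono) auto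
  also have "\<dots> = real (n choose (i + Suc K))"
    using st by (simp add: field_simps)
  finally show ?case .
qed

lemma prodlow:
  fixes n m k :: nat
  assumes k1: "1 \<le> k" and km: "k \<le> m" and k2: "2 * k \<le> m + 2" and mn: "2 * m \<le> n"
  shows "(\<Prod>j<k. real (n - m - j) / real (m + j + 1)) \<ge> 2 * (real (n - m) / real m / 4)^k"
proof -
  obtain k' where k': "k = Suc k'" using k1 by (cases k) auto
  define a where "a = real (n - m) / real m"
  have m0: "real m > 0" using km k1 by simp
  have a0: "a \<ge> 0" by (simp add: a_def)
  have f0: "a / 2 \<le> real (n - m - 0) / real (m + 0 + 1)"
  proof -
    have "a / 2 = real (n - m) / real (2 * m)" by (simp add: a_def)
    also have "\<dots> \<le> real (n - m) / real (m + 1)"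
      by (rule frac_le) (use km k1 in auto)
    finally show ?thesis by simp
  qed
  have fs: "a / 4 \<le> real (n - m - Suc j) / real (m + Suc j + 1)" if j: "j < k'" for j
  proof -
    have c1: "m + Suc j + 1 \<le> 2 * m" using j k' km by simp
    define t where "t = n - m - Suc j"
    have c2: "n - m \<le> 2 * t" using j k' k2 mn by (simp add: t_def)
    define u where "u = m + Suc j + 1"
    have u0: "real u > 0" by (simp add: u_def)
    have "real (n - m) * real u \<le> real (n - m) * real (2 * m)"
      using c1 by (intro mult_left_mono) (auto simp: u_def)
    also have "\<dots> \<le> real (2 * t) * real (2 * m)"
      using c2 by (intro mult_right_mono) auto
    also have "\<dots> = 4 * real m * real t" by simp
    finally have "real (n - m) * real u \<le> 4 * real m * real t" .
    then have "a / 4 \<le> real t / real u" using m0 u0 by (simp add: a_def field_simps)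
    then show ?thesis by (simp add: t_def u_def)
  qed
  have "(\<Prod>j<k. real (n - m - j) / real (m + j + 1))
      = real (n - m - 0) / real (m + 0 + 1) * (\<Prod>j<k'. real (n - m - Suc j) / real (m + Suc j + 1))"
    unfolding k' by (rule prod.lessThan_Suc_shift)
  also have "\<dots> \<ge> a / 2 * (\<Prod>j<k'. a / 4)"
    using f0 fs a0 by (intro mult_mono prod_mono) auto
  finally have "(\<Prod>j<k. real (n - m - j) / real (m + j + 1)) \<ge> a / 2 * (a / 4)^k'" by simp
  moreover have "a / 2 * (a / 4)^k' = 2 * (a / 4)^k" by (simp add: k')
  ultimately show ?thesis by (simp add: a_def)
qed

lemma claim1:
  fixes n m k i :: nat
  assumes k1: "1 \<le> k" and km: "k \<le> m" and k2: "2 * k \<le> m + 2" and mn: "m + k \<le> n" and mn2: "2 * m \<le> n"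
    and im: "i \<le> m"
  shows "(1 / 2^m) * (real (n - m) / real m)^k * real (n choose i) \<le> 2 * real (n choose (i + k))"
proof -
  define a where "a = real (n - m) / real m"
  have a0: "a \<ge> 0" by (simp add: a_def)
  have "(1 / 2^m) * a^k \<le> 2 * 2 * (a / 4)^k"
  proof -
    have e4: "(4::real)^k = 2^(2*k)" by (simp add: power_mult)
    have "(2::real)^(2*k) \<le> 2^(m+2)" using k2 by (intro power_increasing) auto
    then have "(4::real)^k \<le> 2^(m+2)" using e4 by simp
    then have "(4::real)^k \<le> 4 * 2^m" by (simp add: power_add)
    then have "(1 / 2^m) * a^k \<le> (4 * a^k) / 4^k"
      using a0 by (simp add: field_simps mult_left_mono)
    then show ?thesis by (simp add: power_divide)
  qed
  also have "\<dots> \<le> 2 * (\<Prod>j<k. real (n - m - j) / real (m + j + 1))"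
    using prodlow[OF k1 km k2 mn2] by (simp add: a_def)
  finally have h: "(1 / 2^m) * a^k \<le> 2 * (\<Prod>j<k. real (n - m - j) / real (m + j + 1))" .
  define P where "P = (\<Prod>j<k. real (n - m - j) / real (m + j + 1))"
  have "(1 / 2^m) * a^k * real (n choose i) \<le> (2 * P) * real (n choose i)"
    using h unfolding P_def by (rule mult_right_mono) simp
  also have "\<dots> = 2 * (real (n choose i) * P)" by (simp add: mult_ac)
  also have "\<dots> \<le> 2 * real (n choose (i + k))"
    using chain[OF im mn] unfolding P_def by simp
  finally show ?thesis by (simp add: a_def)
qed

lemma sum_disj:
  fixes n m k :: nat
  assumes "2 * m + k < n"
  shows "Vb n m + (\<Sum>i\<le>m. n choose (i + k)) \<le> 2 ^ n"
proof -
  have V: "Vb n m = (\<Sum>j\<in>(\<lambda>i. n - i) ` {..m}. n choose j)"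
  proof -
    have "inj_on (\<lambda>i. n - i) {..m}" using assms by (intro inj_onI) auto
    then have "(\<Sum>j\<in>(\<lambda>i. n - i) ` {..m}. n choose j) = (\<Sum>i\<le>m. n choose (n - i))"
      by (simp add: sum.reindex)
    also have "\<dots> = (\<Sum>i\<le>m. n choose i)"
      using assms by (intro sum.cong) (auto simp: binomial_symmetric[symmetric])
    finally show ?thesis by (simp add: Vb_def)
  qed
  have W: "(\<Sum>i\<le>m. n choose (i + k)) = (\<Sum>j\<in>(\<lambda>i. i + k) ` {..m}. n choose j)"
    by (simp add: sum.reindex)
  have disj: "(\<lambda>i. n - i) ` {..m} \<inter> (\<lambda>i. i + k) ` {..m} = {}" using assms by auto
  have sub: "(\<lambda>i. n - i) ` {..m} \<union> (\<lambda>i. i + k) ` {..m} \<subseteq> {..n}" using assms by auto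
  have "Vb n m + (\<Sum>i\<le>m. n choose (i + k)) = (\<Sum>j\<in>(\<lambda>i. n - i) ` {..m} \<union> (\<lambda>i. i + k) ` {..m}. n choose j)"
    using V W disj by (simp add: sum.union_disjoint)
  also have "\<dots> \<le> (\<Sum>j\<le>n. n choose j)" using sub by (intro sum_mono2) auto
  also have "\<dots> = 2 ^ n" by (simp add: choose_row_sum)
  finally show ?thesis .
qed

lemma chernoff:
  assumes mn: "m \<le> n"
  shows "real (Vb n m) \<le> 2^m * (3/2)^n"
proof -
  have "real (Vb n m) = (\<Sum>i\<le>m. real (n choose i))" by (simp add: Vb_def)
  also have "\<dots> \<le> (\<Sum>i\<le>m. 2^m * (real (n choose i) * (1/2)^i * 1^(n-i)))"
  proof (rule sum_mono)
    fix i assume "i \<in> {..m}"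
    then have "(2::real)^i \<le> 2^m" by (intro power_increasing) auto
    then have "1 \<le> (2::real)^m * (1/2)^i" by (simp add: field_simps)
    then have "real (n choose i) * 1 \<le> real (n choose i) * (2^m * (1/2)^i)"
      by (intro mult_left_mono) auto
    then show "real (n choose i) \<le> 2^m * (real (n choose i) * (1/2)^i * 1^(n-i))"
      by (simp add: mult_ac)
  qed
  also have "\<dots> = 2^m * (\<Sum>i\<le>m. real (n choose i) * (1/2)^i * 1^(n-i))"
    by (simp add: sum_distrib_left)
  also have "\<dots> \<le> 2^m * (\<Sum>i\<le>n. real (n choose i) * (1/2)^i * 1^(n-i))"
    using mn by (intro mult_left_mono sum_mono2) auto
  also have "\<dots> = 2^m * (3/2)^n" using binom_sum[of n "1/2" 1] by simp
  finally show ?thesis .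
qed



lemma exp_cube: "(a::real) \<ge> 0 \<Longrightarrow> a^3 \<le> 1728 * exp (a/4)"
proof -
  assume a0: "a \<ge> 0"
  have "a/12 \<le> exp (a/12)" using exp_ge_add_one_self[of "a/12"] by linarith
  then have "(a/12)^3 \<le> exp (a/12)^3" using a0 by (intro power_mono) auto
  also have "exp (a/12)^3 = exp (a/4)" by (simp add: exp_of_nat_mult[symmetric])
  finally have "(a/12)^3 \<le> exp (a/4)" .
  moreover have "(a/12)^3 = a^3/1728" by (simp add: power_divide)
  ultimately show ?thesis by linarith
qed

lemma exp_lin: "(a::real) \<ge> 0 \<Longrightarrow> 3 * a \<le> 8 * exp (a/4)"
proof -
  assume a0: "a \<ge> 0"
  have "1 + a/8 \<le> exp (a/8)" using exp_ge_add_one_self[of "a/8"] by simp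
  then have "(1 + a/8)^2 \<le> exp (a/8)^2" using a0 by (intro power_mono) auto
  also have "exp (a/8)^2 = exp (a/4)" by (simp add: exp_of_nat_mult[symmetric])
  finally have "(1 + a/8)^2 \<le> exp (a/4)" .
  moreover have "3 * a \<le> 8 * (1 + a/8)^2"
  proof -
    have "0 \<le> (a - 4)^2 / 8 + 6" by simp
    moreover have "8 * (1 + a/8)^2 - 3 * a = (a - 4)^2 / 8 + 6"
      by (simp add: power2_eq_square field_simps)
    ultimately show ?thesis by linarith
  qed
  ultimately show ?thesis by simp
qed

lemma K2:
  fixes n m k :: nat
  assumes m1: "1 \<le> m" and mn: "2 * m \<le> n" and k2: "2 * k \<le> m + 2"
  shows "((1 / 2^m) * (real (n - m) / real m)^k)^2 * real (Vb n m) \<le> 648 * 2^n"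
proof -
  define a where "a = real (n - m) / real m"
  have m0: "real m > 0" using m1 by simp
  have a1: "a \<ge> 1" using mn m0 by (simp add: a_def field_simps)
  have am: "real m * a = real (n - m)" using m0 by (simp add: a_def)
  have A2: "((1 / 2^m) * a^k)^2 \<le> a^(m+2) / 4^m"
  proof -
    have e1: "(a^k)^2 = a^(2*k)" by (simp add: power_mult[symmetric] mult.commute)
    have e2: "(4::real)^m = (2^m)^2" by (simp add: power2_eq_square power_mult_distrib[symmetric])
    have e3: "((1 / 2^m) * a^k)^2 = (a^k)^2 / (2^m)^2" by (simp add: power2_eq_square field_simps)
    have "((1 / 2^m) * a^k)^2 = a^(2*k) / 4^m" using e1 e2 e3 by simp
    also have "\<dots> \<le> a^(m+2) / 4^m" using a1 k2 by (intro divide_right_mono power_increasing) auto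
    finally show ?thesis .
  qed
  have V: "real (Vb n m) \<le> 2^m * (3/2)^n" using mn by (intro chernoff) simp
  have e34: "(3/4::real) \<le> exp (-1/4)" using exp_ge_add_one_self[of "-1/4::real"] by simp
  have p1: "(3/4::real)^(n-m) \<le> exp (-a/4)^m"
  proof -
    have "(3/4::real)^(n-m) \<le> exp (-1/4)^(n-m)" using e34 by (intro power_mono) auto
    also have "\<dots> = exp (real (n-m) * (-1/4))" by (rule exp_of_nat_mult[symmetric])
    also have "\<dots> = exp (real m * (-a/4))" using am by (simp add: algebra_simps)
    also have "\<dots> = exp (-a/4)^m" by (rule exp_of_nat_mult)
    finally show ?thesis .
  qed
  define g where "g = a * (3/4) * exp (-a/4) / 2"
  have g0: "g \<ge> 0" using a1 by (simp add: g_def)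
  have g1: "g \<le> 1"
  proof -
    have "3 * a \<le> 8 * exp (a/4)" using exp_lin a1 by simp
    then have h: "3 * a * exp (-a/4) \<le> 8 * exp (a/4) * exp (-a/4)"
      by (intro mult_right_mono) auto
    have x1: "exp (a/4) * exp (-a/4) = 1" by (simp add: exp_minus[symmetric] exp_add[symmetric])
    have "8 * exp (a/4) * exp (-a/4) = 8" using x1 by (metis mult.assoc mult.right_neutral)
    then have "3 * a * exp (-a/4) \<le> 8" using h by linarith
    moreover have "g = (3 * a * exp (-a/4)) / 8" by (simp add: g_def)
    ultimately show ?thesis by linarith
  qed
  have gm: "g^m \<le> g" using g0 g1 m1 power_decreasing[of 1 m g] by simp
  have ag: "a^2 * g \<le> 648"
  proof -
    have "a^3 \<le> 1728 * exp (a/4)" using exp_cube a1 by simp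
    then have h: "a^3 * exp (-a/4) \<le> 1728 * exp (a/4) * exp (-a/4)"
      by (intro mult_right_mono) auto
    have x1: "exp (a/4) * exp (-a/4) = 1" by (simp add: exp_minus[symmetric] exp_add[symmetric])
    have "1728 * exp (a/4) * exp (-a/4) = 1728" using x1 by (metis mult.assoc mult.right_neutral)
    then have "a^3 * exp (-a/4) \<le> 1728" using h by linarith
    then show ?thesis by (simp add: g_def power2_eq_square power3_eq_cube algebra_simps)
  qed
  have "((1 / 2^m) * a^k)^2 * real (Vb n m) \<le> a^(m+2) / 4^m * (2^m * (3/2)^n)"
    using A2 V a1 by (intro mult_mono) auto
  also have "\<dots> = 2^n * a^2 * ((a / 2)^m * (3/4)^m * (3/4)^(n-m))"
  proof -
    have "(3/2::real)^n = 2^n * (3/4)^n" by (simp add: power_mult_distrib[symmetric])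
    moreover have "(3/4::real)^n = (3/4)^m * (3/4)^(n-m)" using mn by (simp add: power_add[symmetric])
    moreover have "(4::real)^m = 2^m * 2^m" by (simp add: power_mult_distrib[symmetric])
    ultimately show ?thesis by (simp add: power_add power_divide field_simps power2_eq_square)
  qed
  also have "\<dots> \<le> 2^n * a^2 * ((a / 2)^m * (3/4)^m * exp (-a/4)^m)"
    using p1 a1 by (intro mult_left_mono) auto
  also have "\<dots> = 2^n * a^2 * g^m"
  proof -
    have "(a / 2)^m * (3/4)^m * exp (-a/4)^m = (a / 2 * (3/4) * exp (-a/4))^m"
      by (simp only: power_mult_distrib)
    also have "a / 2 * (3/4) * exp (-a/4) = g" by (simp add: g_def)
    finally show ?thesis by simp
  qed
  also have "\<dots> \<le> 2^n * (a^2 * g)" using gm a1 by (simp add: mult.assoc mult_left_mono)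
  also have "\<dots> \<le> 2^n * 648" using ag by (intro mult_left_mono) auto
  finally show ?thesis by (simp add: a_def mult.commute)
qed



lemma binom_r:
  fixes n m i :: nat
  assumes im: "Suc i \<le> m" and mn: "2 * m \<le> n"
  shows "real (n choose i) \<le> real m / real (n - m) * real (n choose Suc i)"
proof -
  have m0: "m > 0" using im by simp
  have nm: "real (n - m) > 0" using mn m0 by simp
  have lt: "i < n" using im mn by simp
  have st: "real (Suc i) * real (n choose Suc i) = real (n - i) * real (n choose i)"
    using binom_step[OF lt] by (metis of_nat_mult)
  have ineq: "real (n - m) * real (Suc i) \<le> real m * real (n - i)"
  proof -
    have h1: "real n * (real i + 1) \<le> real n * real m" using im by (intro mult_left_mono) auto
    have A1: "real (n - m) * real (Suc i) = real n * real i + real n - real m * real i - real m"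
      using mn by (simp add: of_nat_diff algebra_simps)
    have A2: "real m * real (n - i) = real m * real n - real m * real i"
      using lt by (simp add: of_nat_diff algebra_simps)
    have A3: "real n * real i + real n \<le> real m * real n" using h1 by (simp add: algebra_simps)
    show ?thesis using A1 A2 A3 by simp
  qed
  have "real (n - m) * (real (Suc i) * real (n choose i)) \<le> real m * (real (n - i) * real (n choose i))"
    using ineq by (simp add: mult.assoc[symmetric] mult_right_mono)
  also have "\<dots> = real m * (real (Suc i) * real (n choose Suc i))" using st by simp
  finally have h: "real (Suc i) * (real (n - m) * real (n choose i)) \<le> real (Suc i) * (real m * real (n choose Suc i))"
    by (simp add: mult_ac)
  have "real (n - m) * real (n choose i) \<le> real m * real (n choose Suc i)"
    using h by (rule mult_left_le_imp_le) simp
  then show ?thesis using nm by (simp add: field_simps)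
qed

lemma Vb_shift:
  fixes n m :: nat
  assumes mn: "2 * m \<le> n"
  shows "j \<le> m \<Longrightarrow> real (Vb n (m - j)) \<le> (real m / real (n - m))^j * real (Vb n m)"
proof (induction j)
  case 0 then show ?case by simp
next
  case (Suc j)
  define r where "r = real m / real (n - m)"
  have r0: "r \<ge> 0" by (simp add: r_def)
  define b where "b = m - Suc j"
  have bm: "Suc b \<le> m" "m - j = Suc b" using Suc.prems by (auto simp: b_def)
  have "real (Vb n b) = (\<Sum>i\<le>b. real (n choose i))" by (simp add: Vb_def)
  also have "\<dots> \<le> (\<Sum>i\<le>b. r * real (n choose Suc i))"
  proof (rule sum_mono)
    fix i assume "i \<in> {..b}"
    then have "Suc i \<le> m" using bm by simp
    then show "real (n choose i) \<le> r * real (n choose Suc i)"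
      unfolding r_def using mn by (rule binom_r)
  qed
  also have "\<dots> = r * (\<Sum>i\<le>b. real (n choose Suc i))" by (simp add: sum_distrib_left)
  also have "\<dots> \<le> r * (\<Sum>i\<le>Suc b. real (n choose i))"
  proof -
    have "(\<Sum>i\<le>b. real (n choose Suc i)) \<le> (\<Sum>i\<le>Suc b. real (n choose i))"
      by (subst sum.atMost_Suc_shift) simp
    then show ?thesis using r0 by (rule mult_left_mono)
  qed
  also have "\<dots> = r * real (Vb n (m - j))" using bm by (simp add: Vb_def)
  also have "\<dots> \<le> r * (r^j * real (Vb n m))"
  proof -
    have "real (Vb n (m - j)) \<le> r^j * real (Vb n m)" using Suc.IH Suc.prems by (simp add: r_def)
    then show ?thesis using r0 by (rule mult_left_mono)
  qed
  finally show ?case by (simp add: b_def r_def mult.assoc)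
qed

lemma inter_bound:
  fixes n m :: nat
  assumes m1: "1 \<le> m" and mn: "2 * m \<le> n"
    and r4: "4 * (real m / real (n - m)) \<le> 1"
    and u: "u \<in> templates n" and w: "w \<in> templates n" and d: "m < hamming u w"
  shows "real (card (hball n m u \<inter> hball n m w))
           \<le> (4 * (real m / real (n - m)))^((m + 2) div 2) * real (Vb n m)"
proof -
  define r where "r = real m / real (n - m)"
  define d where "d = hamming u w"
  define k where "k = (m + 2) div 2"
  have r0: "r \<ge> 0" by (simp add: r_def)
  have V0: "real (Vb n m) \<ge> 0" by simp
  show ?thesis
  proof (cases "2 * m < d")
    case True
    then have "card (hball n m u \<inter> hball n m w) = 0" using inter_card(2)[OF u w] by (simp add: d_def)
    then show ?thesis using r0 V0 by simp
  next
    case False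
    define b where "b = (2 * m - d) div 2"
    define j where "j = m - b"
    have bj: "b = m - j" "j \<le> m" using False d by (auto simp: b_def j_def d_def)
    have dj: "d \<le> 2 * j" using False by (simp add: j_def b_def)
    have kj: "k \<le> j" using False d by (simp add: j_def b_def k_def d_def)
    have "real (card (hball n m u \<inter> hball n m w)) \<le> 2 ^ d * real (Vb n b)"
      using inter_card(1)[OF u w] by (simp add: d_def b_def) (metis of_nat_le_iff of_nat_mult of_nat_numeral of_nat_power)
    also have "\<dots> \<le> 2 ^ d * (r^j * real (Vb n m))"
      using Vb_shift[OF mn bj(2)] bj(1) by (simp add: r_def)
    also have "\<dots> \<le> 4 ^ j * (r^j * real (Vb n m))"
    proof -
      have "(2::real) ^ d \<le> 2 ^ (2 * j)" using dj by (intro power_increasing) auto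
      also have "\<dots> = 4 ^ j" by (simp add: power_mult)
      finally show ?thesis using r0 V0 by (intro mult_right_mono) auto
    qed
    also have "\<dots> = (4 * r)^j * real (Vb n m)" by (simp add: power_mult_distrib)
    also have "\<dots> \<le> (4 * r)^k * real (Vb n m)"
      using r0 r4 kj V0 by (intro mult_right_mono power_decreasing) (auto simp: r_def)
    finally show ?thesis by (simp add: r_def k_def)
  qed
qed

lemma Uk_lower_one:
  assumes v: "v \<in> enrolments n N" and k: "k \<in> {1..N}" and N2: "2 \<le> N"
  shows "Vb n m \<le> card (Uk n N m k v)"
proof -
  obtain j where j: "j \<in> {1..N} - {k}"
  proof (cases "k = 1")
    case True then show ?thesis using that[of 2] N2 by auto
  next
    case False then show ?thesis using that[of 1] N2 by auto
  qed
  have "hball n m (v j) \<subseteq> Uk n N m k v" using j by (auto simp: Uk_def)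
  moreover have "card (hball n m (v j)) = Vb n m"
    using v j by (intro card_hball) (auto simp: enrolments_def PiE_iff)
  moreover have "finite (Uk n N m k v)" using finite_subset[OF Uk_sub finite_templates] .
  ultimately show ?thesis by (metis card_mono)
qed

lemma Uk_lower_bonf:
  fixes I :: real
  assumes v: "v \<in> enrolments n N" and nw: "\<not> W0 N m v" and k: "k \<in> {1..N}"
    and I: "\<And>u w. u \<in> templates n \<Longrightarrow> w \<in> templates n \<Longrightarrow> m < hamming u w \<Longrightarrow>
              real (card (hball n m u \<inter> hball n m w)) \<le> I"
  shows "real (card (Uk n N m k v)) \<ge> (real N - 1) * real (Vb n m) - (real N - 1) * (real N - 2) / 2 * I"
proof -
  define J where "J = {1..N} - {k}"
  have cJ: "real (card J) = real N - 1" using k by (simp add: J_def card_Diff_singleton of_nat_diff)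
  have vt: "j \<in> {1..N} \<Longrightarrow> v j \<in> templates n" for j using v by (auto simp: enrolments_def PiE_iff)
  have "real (card (\<Union>j\<in>J. hball n m (v j))) \<ge> real (card J) * real (Vb n m) - real (card J) * (real (card J) - 1) / 2 * I"
  proof (rule bonf)
    show "finite J" by (simp add: J_def)
    show "\<forall>j\<in>J. finite (hball n m (v j)) \<and> real (card (hball n m (v j))) = real (Vb n m)"
      using vt by (auto simp: J_def finite_hball card_hball)
    show "\<forall>i\<in>J. \<forall>j\<in>J. i \<noteq> j \<longrightarrow> real (card (hball n m (v i) \<inter> hball n m (v j))) \<le> I"
    proof (intro ballI impI)
      fix i j assume ij: "i \<in> J" "j \<in> J" "i \<noteq> j"
      have "i \<in> {1..N}" "j \<in> {1..N}" using ij by (auto simp: J_def)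
      then have "\<not> hamming (v i) (v j) \<le> m" using nw ij(3) unfolding W0_def by blast
      then show "real (card (hball n m (v i) \<inter> hball n m (v j))) \<le> I"
        using ij vt by (intro I) (auto simp: J_def)
    qed
  qed
  moreover have eqU: "(\<Union>j\<in>J. hball n m (v j)) = Uk n N m k v" by (simp add: Uk_def J_def)
  ultimately have "real (card (Uk n N m k v)) \<ge> (real N - 1) * real (Vb n m) - (real N - 1) * (real N - 1 - 1) / 2 * I"
    unfolding cJ by simp
  moreover have e: "real N - 1 - 1 = real N - 2" by simp
  ultimately show ?thesis by (simp only: e)
qed



lemma ln2_half: "ln (2::real) \<ge> 1/2"
proof -
  have h: "1 + (-1/2) \<le> exp (-1/2::real)" by (rule exp_ge_add_one_self)
  have e: "exp (1/2::real) * exp (-1/2) = 1" by (simp add: exp_add[symmetric])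
  have "exp (1/2::real) * (1/2) \<le> exp (1/2) * exp (-1/2)" using h by (intro mult_left_mono) auto
  then have "exp (1/2::real) \<le> 2" using e by linarith
  then have "ln (exp (1/2::real)) \<le> ln 2" by (subst ln_le_cancel_iff) auto
  then show ?thesis by simp
qed

lemma min_bounds:
  fixes P :: real
  assumes P0: "0 < P" and P1: "P < 1"
  shows "1 \<le> real_of_int \<lceil>- ln 2 / ln (1 - P)\<rceil>"
    and "real_of_int \<lceil>- ln 2 / ln (1 - P)\<rceil> \<le> 1 + ln 2 / P"
    and "P \<le> 1/2 \<Longrightarrow> ln 2 / (2 * P) \<le> real_of_int \<lceil>- ln 2 / ln (1 - P)\<rceil>"
proof -
  define L where "L = - ln (1 - P)"
  have Lneg: "ln (1 - P) < 0" using P0 P1 by simp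
  have L0: "L > 0" using Lneg by (simp add: L_def)
  have y: "- ln 2 / ln (1 - P) = ln 2 / L" by (simp add: L_def)
  have ypos: "ln 2 / L > 0" using L0 by simp
  have LP: "P \<le> L"
  proof -
    have "ln (1 + (-P)) \<le> -P" using P1 by (intro ln_add_one_self_le_self2) auto
    then show ?thesis by (simp add: L_def)
  qed
  have c1: "ln 2 / L \<le> real_of_int \<lceil>ln 2 / L\<rceil>" by (rule le_of_int_ceiling)
  have c2: "real_of_int \<lceil>ln 2 / L\<rceil> \<le> ln 2 / L + 1" by (rule of_int_ceiling_le_add_one)
  show "1 \<le> real_of_int \<lceil>- ln 2 / ln (1 - P)\<rceil>"
  proof -
    have "0 < real_of_int \<lceil>ln 2 / L\<rceil>" using c1 ypos by linarith
    then have "0 < \<lceil>ln 2 / L\<rceil>" by simp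
    then have "1 \<le> \<lceil>ln 2 / L\<rceil>" by simp
    then show ?thesis using y by simp
  qed
  show "real_of_int \<lceil>- ln 2 / ln (1 - P)\<rceil> \<le> 1 + ln 2 / P"
  proof -
    have "ln 2 / L \<le> ln 2 / P" using LP P0 by (intro divide_left_mono) auto
    then show ?thesis unfolding y using c2 by linarith
  qed
  show "P \<le> 1/2 \<Longrightarrow> ln 2 / (2 * P) \<le> real_of_int \<lceil>- ln 2 / ln (1 - P)\<rceil>"
  proof -
    assume Ph: "P \<le> 1/2"
    have "ln (1 / (1 - P)) \<le> 1 / (1 - P) - 1" using P1 by (intro ln_le_minus_one) auto
    moreover have "ln (1 / (1 - P)) = L" using P1 by (simp add: L_def ln_div)
    ultimately have "L \<le> 1 / (1 - P) - 1" by simp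
    also have "\<dots> = P / (1 - P)" using P1 by (simp add: field_simps)
    also have "\<dots> \<le> 2 * P" using P0 Ph by (simp add: field_simps)
    finally have "L \<le> 2 * P" .
    then have "ln 2 / (2 * P) \<le> ln 2 / L" using L0 by (intro divide_left_mono) auto
    then show ?thesis unfolding y using c1 by linarith
  qed
qed

lemma pw_bounds:
  fixes p :: "nat \<Rightarrow> real" and q Q :: real
  assumes b: "\<And>k. k \<in> {1..l} \<Longrightarrow> q \<le> p k \<and> p k \<le> Q" and q0: "0 \<le> q" and Q1: "Q < 1"
    and qQ: "q \<le> Q"
  shows "real l * q / (1 + real l * q) \<le> 1 - (\<Prod>k\<in>{1..l}. 1 - p k)"
    and "1 - (\<Prod>k\<in>{1..l}. 1 - p k) \<le> real l * Q"
    and "1 - (\<Prod>k\<in>{1..l}. 1 - p k) < 1"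
proof -
  have up: "(\<Prod>k\<in>{1..l}. 1 - p k) \<le> (\<Prod>k\<in>{1..l}. 1 - q)"
    using b Q1 by (intro prod_mono) force
  have lo: "(\<Prod>k\<in>{1..l}. 1 - Q) \<le> (\<Prod>k\<in>{1..l}. 1 - p k)"
    using b Q1 by (intro prod_mono) force
  show "1 - (\<Prod>k\<in>{1..l}. 1 - p k) < 1"
  proof -
    have "0 < (1 - Q)^l" using Q1 by simp
    then show ?thesis using lo by simp
  qed
  show "1 - (\<Prod>k\<in>{1..l}. 1 - p k) \<le> real l * Q"
  proof -
    have "1 + real l * (-Q) \<le> (1 + (-Q))^l" using Q1 by (intro Bernoulli_inequality) auto
    then show ?thesis using lo by simp
  qed
  show "real l * q / (1 + real l * q) \<le> 1 - (\<Prod>k\<in>{1..l}. 1 - p k)"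
  proof -
    have ber: "1 + real l * q \<le> (1 + q)^l" using q0 by (intro Bernoulli_inequality) auto
    have q1: "q < 1" using qQ Q1 by simp
    have "(1 - q)^l * (1 + q)^l = (1 - q^2)^l" by (simp add: power_mult_distrib[symmetric] power2_eq_square algebra_simps)
    also have "\<dots> \<le> 1" using q0 q1 by (intro power_le_one) (auto simp: power2_eq_square mult_le_one)
    finally have h: "(1 - q)^l * (1 + q)^l \<le> 1" .
    have pos: "0 < 1 + real l * q" using q0 by (simp add: add_pos_nonneg)
    have "(1 - q)^l * (1 + real l * q) \<le> (1 - q)^l * (1 + q)^l"
      using ber q1 by (intro mult_left_mono) auto
    then have "(1 - q)^l * (1 + real l * q) \<le> 1" using h by linarith
    then have "(1 - q)^l \<le> 1 / (1 + real l * q)" using pos by (simp add: field_simps)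
    then have "1 - 1 / (1 + real l * q) \<le> 1 - (\<Prod>k\<in>{1..l}. 1 - p k)" using up by simp
    moreover have "1 - 1 / (1 + real l * q) = real l * q / (1 + real l * q)" using pos by (simp add: field_simps)
    ultimately show ?thesis by simp
  qed
qed



lemma main_bounds:
  fixes n N m l :: nat and \<alpha> :: real
  assumes n2: "2 \<le> n" and N2: "2 \<le> N" and m1: "1 \<le> m" and xh: "real m / real n \<le> 1/2"
   and hN: "real N \<le> 2 + 2 powr (- real m)
              * ((1 - real m / real n) / (real m / real n)) ^ nat \<lceil>(real m + 1) / 2\<rceil>
              * (1 / sqrt (8 * real m * (1 - real m / real n)) - 2 powr (- real n * \<alpha>))"
   and l1: "1 \<le> l" and lN: "l \<le> N"
  shows "1/4 * 2 powr (real n * (1 - bin_entropy (real m / real n)) - 2 * log 2 (real N) - log 2 (real l))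
           \<le> real_of_int (m_in n N m l)
       \<and> real_of_int (m_in n N m l)
           \<le> 15600 * 2 powr (real n * (1 - bin_entropy (real m / real n) + \<alpha>) - log 2 (real N) - log 2 (real l))"
proof -
  define x where "x = real m / real n"
  have npos: "real n > 0" using n2 by simp
  have mn: "2 * m \<le> n"
  proof -
    have "real m \<le> real n / 2" using xh npos by (simp add: field_simps)
    then have "real (2 * m) \<le> real n" by simp
    then show ?thesis by (simp only: of_nat_le_iff)
  qed
  have mlt: "m < n" using mn m1 by simp
  have x0: "0 < x" using m1 npos by (simp add: x_def)
  have x1: "x \<le> 1/2" using xh by (simp add: x_def)
  define k where "k = (m + 2) div 2"
  have k1: "1 \<le> k" and km: "k \<le> m" and k2: "2 * k \<le> m + 2" and k3: "m + 1 \<le> 2 * k"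
    using m1 by (auto simp: k_def)
  have kdef: "nat \<lceil>(real m + 1) / 2\<rceil> = k"
  proof -
    have "\<lceil>(real m + 1) / 2\<rceil> = int k"
    proof (rule ceiling_unique)
      show "(real m + 1) / 2 \<le> real_of_int (int k)" using k3 by (simp; linarith)
      show "real_of_int (int k) - 1 < (real m + 1) / 2" using k2 by (simp; linarith)
    qed
    then show ?thesis by simp
  qed
  define a where "a = real (n - m) / real m"
  have mpos: "real m > 0" using m1 by simp
  have aeq: "(1 - x) / x = a"
    using npos mpos mlt by (simp add: x_def a_def of_nat_diff field_simps)
  have a1: "a \<ge> 1" using mn mpos by (simp add: a_def field_simps)
  define A where "A = (1 / 2^m) * a^k"
  have A0: "A > 0" using a1 by (simp add: A_def)
  have Aeq: "2 powr (- real m) * ((1 - x) / x) ^ nat \<lceil>(real m + 1) / 2\<rceil> = A"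
  proof -
    have p: "2 powr (- real m) = 1 / 2^m" by (simp add: powr_minus_divide powr_realpow)
    show ?thesis unfolding p kdef aeq A_def ..
  qed
  define s where "s = sqrt (8 * real m * (1 - x))"
  have s2: "s \<ge> 2"
  proof -
    have "8 * real m * (1 - x) \<ge> 8 * 1 * (1/2)" using m1 x1 by (intro mult_mono) auto
    then have "2^2 \<le> 8 * real m * (1 - x)" by simp
    then show ?thesis unfolding s_def by (rule real_le_rsqrt)
  qed
  define t where "t = 2 powr (real n * \<alpha>)"
  have t0: "t > 0" by (simp add: t_def)
  have tinv: "2 powr (- real n * \<alpha>) = 1 / t" by (simp add: t_def powr_minus divide_inverse)
  have hN': "real N \<le> 2 + A * (1 / s - 1 / t)"
    using hN unfolding x_def[symmetric] s_def[symmetric] tinv Aeq by (simp add: mult.assoc)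
  have ts: "s \<le> t"
  proof -
    have "A * (1 / s - 1 / t) \<ge> 0" using hN' N2 by simp
    then have "1 / s - 1 / t \<ge> 0" using A0 by (simp add: zero_le_mult_iff)
    then have "1 / t \<le> 1 / s" by simp
    then show ?thesis using t0 s2 by (simp add: divide_le_eq_1 field_simps)
  qed
  have hN2: "real N - 2 < A / s"
  proof -
    have "A * (1 / s - 1 / t) < A / s" using A0 t0 by (simp add: right_diff_distrib)
    then show ?thesis using hN' by simp
  qed
  define H where "H = 1 / (x^m * (1-x)^(n-m))"
  have Hpos: "H > 0" using x0 x1 by (simp add: H_def)
  have logH: "log 2 H = real n * bin_entropy x"
  proof -
    have nx: "real n * x = real m" using npos by (simp add: x_def)
    have nx1: "real n * (1 - x) = real (n - m)" using npos mlt by (simp add: x_def of_nat_diff field_simps)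
    have x1': "1 - x > 0" using x1 by simp
    have "log 2 H = - (real m * log 2 x + real (n - m) * log 2 (1 - x))"
      using x0 x1' by (simp add: H_def log_divide log_mult log_nat_power)
    also have "\<dots> = real n * bin_entropy x"
    proof -
      have "real n * bin_entropy x = - ((real n * x) * log 2 x + (real n * (1 - x)) * log 2 (1 - x))"
        unfolding bin_entropy_def by (simp add: algebra_simps)
      then show ?thesis unfolding nx nx1 by simp
    qed
    finally show ?thesis .
  qed
  define V where "V = real (Vb n m)"
  have V1: "V \<ge> 1"
  proof -
    have "(n choose 0) \<le> Vb n m" unfolding Vb_def by (rule member_le_sum) auto
    then show ?thesis by (simp add: V_def)
  qed
  have VH: "V \<le> H" using V_le_H[OF m1 mn] by (simp add: V_def H_def x_def)
  have HV: "H \<le> 4 * s * V"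
  proof -
    have "H \<le> 4 * s * real (n choose m)" using H_le[OF m1 mn] by (simp add: H_def x_def s_def)
    moreover have "(n choose m) \<le> Vb n m" unfolding Vb_def by (rule member_le_sum) auto
    then have "4 * s * real (n choose m) \<le> 4 * s * V" using s2 by (intro mult_left_mono) (auto simp: V_def)
    ultimately show ?thesis by linarith
  qed
  have Vlt: "Vb n m < 2 ^ n"
  proof -
    have "Vb n m \<le> (\<Sum>i<n. n choose i)" unfolding Vb_def using mlt by (intro sum_mono2) auto
    also have "\<dots> < (\<Sum>i<n. n choose i) + (n choose n)" by simp
    also have "\<dots> = (\<Sum>i\<le>n. n choose i)" by (simp add: lessThan_Suc_atMost[symmetric])
    also have "\<dots> = 2 ^ n" by (simp add: choose_row_sum)
    finally show ?thesis .
  qed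
  have Vlt': "V < 2 ^ n" using Vlt unfolding V_def by (metis of_nat_less_iff of_nat_numeral of_nat_power)
  have A_s: "A > s" if N3: "real N \<ge> 3"
  proof -
    have "1 < A / s" using hN2 N3 by linarith
    then show ?thesis using s2 by (simp add: field_simps)
  qed
  have big: "A > 1 \<Longrightarrow> 2 * m + k < n"
  proof (rule ccontr)
    assume A1: "A > 1" and "\<not> 2 * m + k < n"
    then have nle: "n \<le> 2 * m + k" by simp
    have "real (n - m) \<le> real (m + k)" using nle by simp
    also have "\<dots> \<le> 2 * real m" using km by simp
    finally have "a \<le> 2" using mpos by (simp add: a_def field_simps)
    then have "a^k \<le> 2^k" using a1 by (intro power_mono) auto
    also have "(2::real)^k \<le> 2^m" using km by (intro power_increasing) auto
    finally have "A \<le> 1" by (simp add: A_def)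
    then show False using A1 by simp
  qed
  have K1: "(N - 1) * Vb n m < 2 ^ n"
  proof (cases "N = 2")
    case True then show ?thesis using Vlt by simp
  next
    case False
    then have N3: "real N \<ge> 3" using N2 by simp
    have As: "A > s" using A_s N3 .
    have bg: "2 * m + k < n" using big As s2 by simp
    have "(real N - 1) * V < (1 + A / s) * V" using hN2 V1 by (intro mult_strict_right_mono) auto
    also have "\<dots> \<le> (1 + A / 2) * V"
    proof -
      have "A / s \<le> A / 2" using A0 s2 by (intro divide_left_mono) auto
      then show ?thesis using V1 by (intro mult_right_mono) auto
    qed
    also have "\<dots> = V + (\<Sum>i\<le>m. A * real (n choose i) / 2)"
    proof -
      have e1: "A / 2 * V = (\<Sum>i\<le>m. A / 2 * real (n choose i))"
        by (simp only: V_def Vb_def of_nat_sum sum_distrib_left)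
      have e2: "(\<Sum>i\<le>m. A / 2 * real (n choose i)) = (\<Sum>i\<le>m. A * real (n choose i) / 2)" by simp
      have e3: "(1 + A / 2) * V = V + A / 2 * V" by (simp only: distrib_right mult_1)
      show ?thesis by (metis e1 e2 e3)
    qed
    also have "\<dots> \<le> V + (\<Sum>i\<le>m. real (n choose (i + k)))"
    proof -
      have "(\<Sum>i\<le>m. A * real (n choose i) / 2) \<le> (\<Sum>i\<le>m. real (n choose (i + k)))"
      proof (rule sum_mono)
        fix i assume "i \<in> {..m}"
        then have "A * real (n choose i) \<le> 2 * real (n choose (i + k))"
          using claim1[OF k1 km k2 _ mn, of i] bg by (simp add: A_def a_def)
        then show "A * real (n choose i) / 2 \<le> real (n choose (i + k))" by simp
      qed
      then show ?thesis by simp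
    qed
    also have "\<dots> \<le> 2 ^ n"
    proof -
      have "Vb n m + (\<Sum>i\<le>m. n choose (i + k)) \<le> 2 ^ n" using sum_disj[OF bg] .
      then have "real (Vb n m + (\<Sum>i\<le>m. n choose (i + k))) \<le> 2 ^ n"
        by (metis of_nat_le_iff of_nat_numeral of_nat_power)
      then show ?thesis by (simp add: V_def)
    qed
    finally have "(real N - 1) * V < 2 ^ n" .
    then have "real ((N - 1) * Vb n m) < real (2 ^ n)" using N2 by (simp add: V_def of_nat_diff)
    then show ?thesis by (simp only: of_nat_less_iff)
  qed
  have K1r: "(real N - 1) * V < 2 ^ n"
  proof -
    have "real ((N - 1) * Vb n m) < real (2 ^ n)" using K1 by (simp only: of_nat_less_iff)
    then show ?thesis using N2 by (simp add: V_def of_nat_diff)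
  qed
  have K2: "real N * (real N - 1) * V \<le> 972 * 2 ^ n"
  proof (cases "N = 2")
    case True
    have p: "(0::real) < 2^n" by simp
    have "real N * (real N - 1) * V = 2 * V" using True by simp
    then show ?thesis using Vlt' p by linarith
  next
    case False
    then have N3: "real N \<ge> 3" using N2 by simp
    have As: "A > s" using A_s N3 .
    have Ns: "real N \<le> 3/2 * A"
    proof -
      have "real N < 2 + A / s" using hN2 by simp
      also have "\<dots> \<le> 3 * (A / s)" using As s2 by (simp add: field_simps)
      also have "\<dots> \<le> 3 * (A / 2)" using A0 s2 by (intro mult_left_mono divide_left_mono) auto
      finally show ?thesis by simp
    qed
    have N1s: "real N - 1 \<le> A"
    proof -
      have "real N - 1 < 1 + A / s" using hN2 by simp
      also have "\<dots> \<le> 2 * (A / s)" using As s2 by (simp add: field_simps)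
      also have "\<dots> \<le> 2 * (A / 2)" using A0 s2 by (intro mult_left_mono divide_left_mono) auto
      finally show ?thesis by simp
    qed
    have "real N * (real N - 1) * V \<le> (3/2 * A) * A * V"
      using Ns N1s N3 V1 by (intro mult_right_mono mult_mono) auto
    also have "\<dots> = 3/2 * (A^2 * V)" by (simp add: power2_eq_square)
    also have "\<dots> \<le> 3/2 * (648 * 2^n)"
      using K2[OF m1 mn k2] by (simp add: A_def a_def V_def mult.commute)
    finally show ?thesis by simp
  qed
  define Sep where "Sep = {v \<in> enrolments n N. \<not> W0 N m v}"
  have Sne: "Sep \<noteq> {}" using exists_sep[OF K1] by (auto simp: Sep_def)
  have fSep: "finite Sep" by (simp add: Sep_def enrolments_def finite_PiE finite_templates)
  define q where "q = (real N - 1) * V / (5 * 2 ^ n)"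
  define Q where "Q = (real N - 1) * V / 2 ^ n"
  have q0: "q > 0" using N2 V1 by (simp add: q_def)
  have Q1: "Q < 1" using K1r by (simp add: Q_def)
  have qQ: "q \<le> Q" using N2 V1 by (simp add: q_def Q_def field_simps)
  have Ucard: "(real N - 1) * V / 5 \<le> real (card (Uk n N m k' v)) \<and> real (card (Uk n N m k' v)) \<le> (real N - 1) * V"
    if v: "v \<in> Sep" and k': "k' \<in> {1..N}" for v k'
  proof
    have ve: "v \<in> enrolments n N" and nw: "\<not> W0 N m v" using v by (auto simp: Sep_def)
    have "card (Uk n N m k' v) \<le> (N - 1) * Vb n m" using Uk_upper[OF ve k'] .
    then have "real (card (Uk n N m k' v)) \<le> real ((N - 1) * Vb n m)" by (simp only: of_nat_le_iff)
    then show "real (card (Uk n N m k' v)) \<le> (real N - 1) * V" using N2 by (simp add: V_def of_nat_diff)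
    show "(real N - 1) * V / 5 \<le> real (card (Uk n N m k' v))"
    proof (cases "real N \<le> 3")
      case True
      have "Vb n m \<le> card (Uk n N m k' v)" using Uk_lower_one[OF ve k' N2] .
      then have "V \<le> real (card (Uk n N m k' v))" by (simp add: V_def)
      moreover have "(real N - 1) * V / 5 \<le> V" using True V1 by (simp add: field_simps)
      ultimately show ?thesis by simp
    next
      case False
      then have N4: "real N \<ge> 4" using N2 by simp
      have A4: "A > 4"
      proof -
        have "2 < A / s" using hN2 N4 by simp
        then have "2 * s < A" using s2 by (simp add: field_simps)
        then show ?thesis using s2 by simp
      qed
      have a4: "a \<ge> 4"
      proof (rule ccontr)
        assume "\<not> a \<ge> 4"
        then have "a^k < 4^k" using a1 k1 by (intro power_strict_mono) auto
        also have "(4::real)^k = 2^(2*k)" by (simp add: power_mult)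
        also have "(2::real)^(2*k) \<le> 2^(m+2)" using k2 by (intro power_increasing) auto
        finally have "A < 4" by (simp add: A_def power_add field_simps)
        then show False using A4 by simp
      qed
      define r where "r = real m / real (n - m)"
      have nmpos: "real (n - m) > 0" using mlt by simp
      have ar: "a * r = 1" using mpos nmpos by (simp add: a_def r_def)
      have r0: "r > 0" using mpos nmpos by (simp add: r_def)
      have r4: "4 * r \<le> 1"
      proof -
        have "4 * r \<le> a * r" using a4 r0 by (intro mult_right_mono) auto
        then show ?thesis using ar by simp
      qed
      have s52: "s \<ge> 5/2"
      proof -
        have "real (n - m) \<ge> 4 * real m" using a4 mpos by (simp add: a_def field_simps)
        then have "real n \<ge> 5 * real m" using mlt by (simp add: of_nat_diff)
        then have "x \<le> 1/5" using npos by (simp add: x_def field_simps)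
        then have h: "real m * (1 - x) \<ge> 1 * (4/5)" using m1 by (intro mult_mono) auto
        have e1: "(5/2::real)^2 = 25/4" by (simp add: power2_eq_square)
        have e2: "8 * real m * (1 - x) = 8 * (real m * (1 - x))" by simp
        have "(5/2)^2 \<le> 8 * real m * (1 - x)" unfolding e1 e2 using h by linarith
        then show ?thesis unfolding s_def by (rule real_le_rsqrt)
      qed
      define I where "I = (4 * r)^k * V"
      have Ib: "real (card (hball n m u \<inter> hball n m w)) \<le> I"
        if "u \<in> templates n" "w \<in> templates n" "m < hamming u w" for u w
        using inter_bound[OF m1 mn _ that] r4 by (simp add: I_def r_def k_def V_def)
      have bonf: "real (card (Uk n N m k' v)) \<ge> (real N - 1) * V - (real N - 1) * (real N - 2) / 2 * I"
        using Uk_lower_bonf[OF ve nw k' Ib] by (simp add: V_def)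
      have AI: "A * (4 * r)^k = 4^k / 2^m"
      proof -
        have "A * (4 * r)^k = (a * r)^k * 4^k / 2^m" by (simp add: A_def power_mult_distrib field_simps)
        then show ?thesis using ar by simp
      qed
      have AI4: "A * (4 * r)^k \<le> 4"
      proof -
        have "(4::real)^k = 2^(2*k)" by (simp add: power_mult)
        also have "(2::real)^(2*k) \<le> 2^(m+2)" using k2 by (intro power_increasing) auto
        finally have "(4::real)^k \<le> 4 * 2^m" by (simp add: power_add)
        then have "(4::real)^k / 2^m \<le> 4" by (simp add: divide_le_eq)
        then show ?thesis unfolding AI .
      qed
      have frac: "(real N - 2) * (4 * r)^k / 2 \<le> 4/5"
      proof -
        have r4k: "(4 * r)^k \<ge> 0" using r0 by simp
        have "(real N - 2) * (4 * r)^k \<le> A / s * (4 * r)^k"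
          using hN2 r4k by (intro mult_right_mono) auto
        also have "\<dots> = (A * (4 * r)^k) / s" by simp
        also have "\<dots> \<le> 4 / s" using AI4 s2 by (intro divide_right_mono) auto
        also have "\<dots> \<le> 4 / (5/2)" using s52 by (intro divide_left_mono) auto
        finally show ?thesis by simp
      qed
      have "(real N - 1) * V / 5 = (real N - 1) * V * (1 - 4/5)" by simp
      also have "\<dots> \<le> (real N - 1) * V * (1 - (real N - 2) * (4 * r)^k / 2)"
        using frac N2 V1 by (intro mult_left_mono) auto
      also have "\<dots> = (real N - 1) * V - (real N - 1) * (real N - 2) / 2 * I"
        by (simp add: I_def algebra_simps)
      also have "\<dots> \<le> real (card (Uk n N m k' v))" using bonf .
      finally show ?thesis .
    qed
  qed
  have pk: "q \<le> p_att n N m k' \<and> p_att n N m k' \<le> Q" if k': "k' \<in> {1..l}" for k'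
  proof -
    have kN: "k' \<in> {1..N}" using k' lN by auto
    have cS: "real (card Sep) > 0" using Sne fSep by (simp add: card_gt_0_iff)
    have pe: "p_att n N m k' = (\<Sum>v\<in>Sep. real (card (Uk n N m k' v))) / (real (card Sep) * 2 ^ n)"
      using p_att_eq[of n N m k'] by (simp add: Sep_def)
    have lo: "real (card Sep) * ((real N - 1) * V / 5) \<le> (\<Sum>v\<in>Sep. real (card (Uk n N m k' v)))"
    proof -
      have "(\<Sum>v\<in>Sep. (real N - 1) * V / 5) \<le> (\<Sum>v\<in>Sep. real (card (Uk n N m k' v)))"
        using Ucard kN by (intro sum_mono) auto
      then show ?thesis by simp
    qed
    have hi: "(\<Sum>v\<in>Sep. real (card (Uk n N m k' v))) \<le> real (card Sep) * ((real N - 1) * V)"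
    proof -
      have "(\<Sum>v\<in>Sep. real (card (Uk n N m k' v))) \<le> (\<Sum>v\<in>Sep. (real N - 1) * V)"
        using Ucard kN by (intro sum_mono) auto
      then show ?thesis by simp
    qed
    have p2: "(2::real)^n > 0" by simp
    show ?thesis
    proof
      have cp: "real (card Sep) * 2 ^ n > 0" using cS p2 by simp
      have "q = (real (card Sep) * ((real N - 1) * V / 5)) / (real (card Sep) * 2 ^ n)"
        using cS p2 by (simp add: q_def field_simps)
      also have "\<dots> \<le> (\<Sum>v\<in>Sep. real (card (Uk n N m k' v))) / (real (card Sep) * 2 ^ n)"
        using lo cp by (intro divide_right_mono) auto
      finally show "q \<le> p_att n N m k'" unfolding pe .
      have "(\<Sum>v\<in>Sep. real (card (Uk n N m k' v))) / (real (card Sep) * 2 ^ n)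
          \<le> (real (card Sep) * ((real N - 1) * V)) / (real (card Sep) * 2 ^ n)"
        using hi cp by (intro divide_right_mono) auto
      also have "\<dots> = Q" using cS p2 by (simp add: Q_def field_simps)
      finally show "p_att n N m k' \<le> Q" unfolding pe .
    qed
  qed
  define P where "P = p_w n N m l"
  have Peq: "P = 1 - (\<Prod>k\<in>{1..l}. 1 - p_att n N m k)" by (simp add: P_def p_w_def)
  have Plo: "real l * q / (1 + real l * q) \<le> P"
    using pw_bounds(1)[of l q "p_att n N m" Q] pk q0 Q1 qQ Peq by auto
  have Phi: "P \<le> real l * Q"
    using pw_bounds(2)[of l q "p_att n N m" Q] pk q0 Q1 qQ Peq by auto
  have P1: "P < 1"
    using pw_bounds(3)[of l q "p_att n N m" Q] pk q0 Q1 qQ Peq by auto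
  have lq0: "real l * q > 0" using l1 q0 by simp
  have "real l * q / (1 + real l * q) > 0" using lq0 by simp
  then have P0: "P > 0" using Plo by linarith
  have mdef: "real_of_int (m_in n N m l) = real_of_int \<lceil>- ln 2 / ln (1 - P)\<rceil>"
    by (simp add: m_in_def P_def)
  have lQ0: "real l * Q > 0" using l1 N2 V1 by (simp add: Q_def)
  have Nl: "real l \<le> real N" using lN by simp
  have lpos: "real l > 0" using l1 by simp
  have Npos: "real N > 0" using N2 by simp
  have mlow: "1 / (4 * (real l * Q)) \<le> real_of_int (m_in n N m l)"
  proof (cases "P \<le> 1/2")
    case True
    have "1 / (4 * (real l * Q)) \<le> ln 2 / (2 * (real l * Q))"
      using ln2_half lQ0 by (simp add: field_simps)
    also have "\<dots> \<le> ln 2 / (2 * P)"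
    proof (rule divide_left_mono)
      show "2 * P \<le> 2 * (real l * Q)" using Phi by simp
      show "0 \<le> ln (2::real)" by simp
      have "0 < 2 * (real l * Q)" using lQ0 by simp
      moreover have "0 < 2 * P" using P0 by simp
      ultimately show "0 < 2 * (real l * Q) * (2 * P)" by (rule mult_pos_pos)
    qed
    also have "\<dots> \<le> real_of_int (m_in n N m l)" using min_bounds(3)[OF P0 P1 True] mdef by simp
    finally show ?thesis .
  next
    case False
    have "1 / (4 * (real l * Q)) \<le> 1" using Phi False lQ0 by (simp add: field_simps)
    also have "\<dots> \<le> real_of_int (m_in n N m l)" using min_bounds(1)[OF P0 P1] mdef by simp
    finally show ?thesis .
  qed
  have elow: "real n * (1 - bin_entropy x) - 2 * log 2 (real N) - log 2 (real l)
       = log 2 (2 ^ n / (H * real N ^ 2 * real l))"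
    using Hpos Npos lpos logH
    by (simp add: log_divide log_mult log_nat_power algebra_simps)
  have low: "1/4 * (2 ^ n / (H * real N ^ 2 * real l)) \<le> real_of_int (m_in n N m l)"
  proof -
    have NH: "(real N - 1) * V \<le> real N ^ 2 * H"
    proof -
      have "(real N - 1) * V \<le> real N * H" using VH N2 V1 by (intro mult_mono) auto
      also have "\<dots> \<le> real N ^ 2 * H" using N2 Hpos by (intro mult_right_mono) (auto simp: power2_eq_square)
      finally show ?thesis .
    qed
    have "1/4 * (2 ^ n / (H * real N ^ 2 * real l)) \<le> 1 / (4 * (real l * Q))"
    proof -
      have le: "real l * ((real N - 1) * V) \<le> real l * (real N ^ 2 * H)" using NH lpos by (intro mult_left_mono) auto
      have NV: "(real N - 1) * V > 0" using N2 V1 by simp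
      have d1: "1/4 * (2 ^ n / (H * real N ^ 2 * real l)) = 2 ^ n / (4 * (real l * (real N ^ 2 * H)))"
        using Hpos Npos lpos by (simp add: field_simps)
      have d2: "1 / (4 * (real l * Q)) = 2 ^ n / (4 * (real l * ((real N - 1) * V)))"
        using NV lpos by (simp add: Q_def field_simps)
      have "2 ^ n / (4 * (real l * (real N ^ 2 * H))) \<le> 2 ^ n / (4 * (real l * ((real N - 1) * V)))"
      proof (rule divide_left_mono)
        show "4 * (real l * ((real N - 1) * V)) \<le> 4 * (real l * (real N ^ 2 * H))" using le by simp
        show "0 \<le> (2::real) ^ n" by simp
        have "0 < 4 * (real l * (real N ^ 2 * H))" using lpos Npos Hpos by simp
        moreover have "0 < 4 * (real l * ((real N - 1) * V))" using lpos NV by simp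
        ultimately show "0 < 4 * (real l * (real N ^ 2 * H)) * (4 * (real l * ((real N - 1) * V)))"
          by (rule mult_pos_pos)
      qed
      then show ?thesis unfolding d1 d2 .
    qed
    then show ?thesis using mlow by simp
  qed
  have mup: "real_of_int (m_in n N m l) \<le> 390 / (real l * q)"
  proof -
    have b0: "real_of_int (m_in n N m l) \<le> 1 + ln 2 / P" using min_bounds(2)[OF P0 P1] mdef by simp
    have b1: "ln 2 / P \<le> ln 2 * ((1 + real l * q) / (real l * q))"
    proof -
      have "1 / P \<le> (1 + real l * q) / (real l * q)"
        using Plo lq0 P0 by (simp add: field_simps)
      then show ?thesis using ln_gt_zero[of 2] by (simp add: divide_inverse mult_left_mono)
    qed
    have b2: "1 + ln 2 * ((1 + real l * q) / (real l * q)) \<le> 2 + 1 / (real l * q)"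
    proof -
      have l2: "ln (2::real) \<le> 1" using ln_le_minus_one[of 2] by simp
      have "ln 2 * ((1 + real l * q) / (real l * q)) = ln 2 + ln 2 / (real l * q)"
      proof -
        define y where "y = real l * q"
        have y0: "y > 0" using lq0 by (simp add: y_def)
        have "(1 + y) / y = 1 / y + 1" using y0 by (simp add: add_divide_distrib)
        then have "ln 2 * ((1 + y) / y) = ln 2 + ln 2 / y" by (simp add: distrib_left)
        then show ?thesis by (simp add: y_def)
      qed
      moreover have "ln 2 / (real l * q) \<le> 1 / (real l * q)" using l2 lq0 by (intro divide_right_mono) auto
      ultimately show ?thesis using l2 by simp
    qed
    have b3: "2 + 1 / (real l * q) \<le> 390 / (real l * q)"
    proof -
      have "real l * q \<le> real N * q" using Nl q0 by (intro mult_right_mono) auto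
      also have "\<dots> = real N * (real N - 1) * V / (5 * 2^n)" by (simp add: q_def)
      also have "\<dots> \<le> 972 / 5" using K2 by (simp add: field_simps)
      finally have "real l * q \<le> 972 / 5" .
      then show ?thesis using lq0 by (simp add: field_simps)
    qed
    show ?thesis using b0 b1 b2 b3 by linarith
  qed
  have lqb: "390 / (real l * q) \<le> 15600 * (2 ^ n * t / (H * real N * real l))"
  proof -
    have a: "real N \<le> 2 * (real N - 1)" using N2 by simp
    have "H * real N \<le> (4 * t * V) * (2 * (real N - 1))"
    proof -
      have "4 * s * V \<le> 4 * t * V" using ts V1 by (intro mult_right_mono) auto
      then have "H \<le> 4 * t * V" using HV by linarith
      moreover have "0 \<le> 4 * t * V" using t0 V1 by simp
      ultimately show ?thesis using a Hpos Npos by (intro mult_mono) auto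
    qed
    then have "H * real N * real l \<le> (4 * t * V) * (2 * (real N - 1)) * real l"
      using lpos by (intro mult_right_mono) auto
    also have "\<dots> = 8 * t * (real l * ((real N - 1) * V))" by (simp add: algebra_simps)
    finally have D: "H * real N * real l \<le> 8 * t * (real l * ((real N - 1) * V))" .
    have D1: "real l * ((real N - 1) * V) > 0" using lpos N2 V1 by simp
    have D2: "H * real N * real l > 0" using Hpos Npos lpos by simp
    define DD where "DD = real l * ((real N - 1) * V)"
    have DD0: "DD > 0" using D1 by (simp add: DD_def)
    have lqD: "real l * q = DD / (5 * 2 ^ n)" unfolding q_def DD_def by simp
    have e1a: "390 / (real l * q) = 1950 * 2 ^ n / DD" unfolding lqD using DD0 by (simp add: field_simps)
    have e1b: "1950 * 2 ^ n / DD = (1950 * 2 ^ n * (8 * t)) / (8 * t * DD)" using t0 DD0 by (simp add: field_simps)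
    have e1: "390 / (real l * q) = (1950 * 2 ^ n * (8 * t)) / (8 * t * (real l * ((real N - 1) * V)))"
      using e1a e1b by (simp add: DD_def)
    have e2: "15600 * (2 ^ n * t / (H * real N * real l)) = (1950 * 2 ^ n * (8 * t)) / (H * real N * real l)"
      by simp
    have "(1950 * 2 ^ n * (8 * t)) / (8 * t * (real l * ((real N - 1) * V)))
        \<le> (1950 * 2 ^ n * (8 * t)) / (H * real N * real l)"
    proof (rule divide_left_mono)
      show "H * real N * real l \<le> 8 * t * (real l * ((real N - 1) * V))" using D .
      show "0 \<le> 1950 * 2 ^ n * (8 * t)" using t0 by simp
      have "0 < 8 * t * (real l * ((real N - 1) * V))" using t0 D1 by simp
      then show "0 < 8 * t * (real l * ((real N - 1) * V)) * (H * real N * real l)"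
        using D2 by (rule mult_pos_pos)
    qed
    then show ?thesis unfolding e1 e2 .
  qed
  have eup: "real n * (1 - bin_entropy x + \<alpha>) - log 2 (real N) - log 2 (real l)
       = log 2 (2 ^ n * t / (H * real N * real l))"
    using Hpos Npos lpos logH t0
    by (simp add: log_divide log_mult log_nat_power t_def algebra_simps)
  have pos1: "2 ^ n / (H * real N ^ 2 * real l) > 0" using Hpos Npos lpos by simp
  have pos2: "2 ^ n * t / (H * real N * real l) > 0" using Hpos Npos lpos t0 by simp
  have c1: "2 powr log 2 (2 ^ n / (H * real N ^ 2 * real l)) = 2 ^ n / (H * real N ^ 2 * real l)"
    using pos1 by simp
  have c2: "2 powr log 2 (2 ^ n * t / (H * real N * real l)) = 2 ^ n * t / (H * real N * real l)"
    using pos2 by simp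
  show ?thesis
    unfolding x_def[symmetric] elow eup c1 c2
    using low mup lqb by (intro conjI) linarith+
qed

theorem corollary4p12:
  "\<exists>c C :: real. c > 0 \<and> C > 0 \<and>
    (\<forall>(n::nat) (N::nat) (eps::nat) (\<alpha>::real) (l::nat).
       2 \<le> n \<longrightarrow> 2 \<le> N \<longrightarrow> 1 \<le> eps \<longrightarrow>
       real eps / real n \<le> 1/2 \<longrightarrow>
       \<alpha> < bin_entropy (real eps / real n) \<longrightarrow>
       real N \<le> 2 + 2 powr (- real eps)
              * ((1 - real eps / real n) / (real eps / real n))
                  ^ nat \<lceil>(real eps + 1) / 2\<rceil>
              * (1 / sqrt (8 * real eps * (1 - real eps / real n))
                 - 2 powr (- real n * \<alpha>)) \<longrightarrow>
       1 \<le> l \<longrightarrow> l \<le> N \<longrightarrow>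
         c * 2 powr (real n * (1 - bin_entropy (real eps / real n))
                     - 2 * log 2 (real N) - log 2 (real l))
           \<le> real_of_int (m_in n N eps l)
       \<and> real_of_int (m_in n N eps l)
           \<le> C * 2 powr (real n * (1 - bin_entropy (real eps / real n) + \<alpha>)
                         - log 2 (real N) - log 2 (real l)))"
    apply (rule exI[where x="1/4"])
  apply (rule exI[where x="15600"])
  apply (intro conjI)
    apply simp
   apply simp
  apply (intro allI impI)
  apply (rule main_bounds; assumption)
  done

end
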